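(* Let $n\ge2$ and let $\Phi:\mathfrak{B}([n])\to\mathbf{Gpd}$ be a covariant strict 2-functor. Suppose: (A1) for $k\in\{n-2,n-1\}$ with $k\ge1$, the condition $A^{[k]}_\emptyset$ holds, i.e. the canonical functor $\operatorname{colim}_{\mathfrak{B}([k])}\Phi\to\Phi([k])$ is injective on objects; (A2) for every integer $1\le k\le n-2$ and every subset $U\subseteq\{k+2,\dots,n\}$ with $|U|\ge n-k-2$, the condition $A^V_U$ holds with $V=[k]\sqcup U$, i.e. the canonical functor $\operatorname{colim}_{\mathfrak{B}(V:U)}\Phi\to\Phi(V)$ is injective on objects. Then the comparison functor $\delta:\operatorname{2colim}_{\mathfrak{B}([n])}\Phi\to\operatorname{colim}_{\mathfrak{B}([n])}\Phi$ is an equivalence of categories.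
   Context: For $n\ge1$, $[n]=\{1,\dots,n\}$. For a finite set $V$, $\mathfrak{B}(V)$ is the poset of proper subsets of $V$ ordered by inclusion; for $U\subsetneq V$, $\mathfrak{B}(V:U)=\{X:U\subseteq X\subsetneq V\}$; these are regarded as subposets of $\mathfrak{B}([n])$ and colimits over them are of the restriction of $\Phi$. $\mathbf{Gpd}$ is the 2-category of small groupoids. A functor is injective on objects if its map on object sets is injective. $\operatorname{colim}\Phi$ is the ordinary colimit in the category of small groupoids; the canonical functor $\operatorname{colim}_{\mathfrak{B}(V:U)}\Phi\to\Phi(V)$ is induced by the functors $\Phi(X)\to\Phi(V)$. $\operatorname{2colim}\Phi$ is the groupoid 2-representing $\mathcal G\mapsto\operatorname{2lim}_i\operatorname{Hom}_{\mathbf{Gpd}}(\Phi(i),\mathcal G)$ (the 2-limit being the groupoid of families of functors $X_i$ with natural isomorphisms $X_i\Rightarrow X_j\circ\Phi_{i,j}$ satisfying the 1-cocycle condition); concretely it is the Grothendieck construction $\int\Phi$ with all morphisms inverted. The comparison functor $\delta$ is induced by the fully faithful functor $\lim\operatorname{Hom}(\Phi,\mathcal G)\to\operatorname{2lim}\operatorname{Hom}(\Phi,\mathcal G)$, $(x_i)\mapsto(x_i,\mathrm{id})$; concretely it sends $(i,x)$ to the image of $x$ in $\operatorname{colim}\Phi$. *)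

theory Defs
  imports Main
begin

section \<open>Small groupoids, functors, natural isomorphisms, equivalences\<close>

text \<open>A (small) groupoid given by an object set, an arrow set, domain, codomain,
  composition (Comp g f = g after f, defined when Cod f = Dom g) and identities.\<close>

record ('o, 'm) gpd =
  Obj  :: "'o set"
  Arr  :: "'m set"
  Dom  :: "'m \<Rightarrow> 'o"
  Cod  :: "'m \<Rightarrow> 'o"
  Comp :: "'m \<Rightarrow> 'm \<Rightarrow> 'm"
  Idt  :: "'o \<Rightarrow> 'm"

definition groupoid :: "('o, 'm) gpd \<Rightarrow> bool" where
  "groupoid G \<longleftrightarrow>
     (\<forall>f\<in>Arr G. Dom G f \<in> Obj G \<and> Cod G f \<in> Obj G) \<and>
     (\<forall>a\<in>Obj G. Idt G a \<in> Arr G \<and> Dom G (Idt G a) = a \<and> Cod G (Idt G a) = a) \<and>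
     (\<forall>f\<in>Arr G. \<forall>g\<in>Arr G. Cod G f = Dom G g \<longrightarrow>
        Comp G g f \<in> Arr G \<and> Dom G (Comp G g f) = Dom G f \<and> Cod G (Comp G g f) = Cod G g) \<and>
     (\<forall>f\<in>Arr G. Comp G f (Idt G (Dom G f)) = f \<and> Comp G (Idt G (Cod G f)) f = f) \<and>
     (\<forall>f\<in>Arr G. \<forall>g\<in>Arr G. \<forall>h\<in>Arr G. Cod G f = Dom G g \<longrightarrow> Cod G g = Dom G h \<longrightarrow>
        Comp G h (Comp G g f) = Comp G (Comp G h g) f) \<and>
     (\<forall>f\<in>Arr G. \<exists>g\<in>Arr G. Dom G g = Cod G f \<and> Cod G g = Dom G f \<and>
        Comp G g f = Idt G (Dom G f) \<and> Comp G f g = Idt G (Cod G f))"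

definition gfunctor ::
  "('o, 'm) gpd \<Rightarrow> ('p, 'n) gpd \<Rightarrow> ('o \<Rightarrow> 'p) \<Rightarrow> ('m \<Rightarrow> 'n) \<Rightarrow> bool" where
  "gfunctor G H fo fm \<longleftrightarrow>
     (\<forall>a\<in>Obj G. fo a \<in> Obj H) \<and>
     (\<forall>f\<in>Arr G. fm f \<in> Arr H \<and> Dom H (fm f) = fo (Dom G f) \<and> Cod H (fm f) = fo (Cod G f)) \<and>
     (\<forall>a\<in>Obj G. fm (Idt G a) = Idt H (fo a)) \<and>
     (\<forall>f\<in>Arr G. \<forall>g\<in>Arr G. Cod G f = Dom G g \<longrightarrow> fm (Comp G g f) = Comp H (fm g) (fm f))"

definition nat_iso ::
  "('o, 'm) gpd \<Rightarrow> ('p, 'n) gpd \<Rightarrow> ('o \<Rightarrow> 'p) \<Rightarrow> ('m \<Rightarrow> 'n) \<Rightarrow> ('o \<Rightarrow> 'p) \<Rightarrow> ('m \<Rightarrow> 'n)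
   \<Rightarrow> ('o \<Rightarrow> 'n) \<Rightarrow> bool" where
  "nat_iso G H f1o f1m f2o f2m eta \<longleftrightarrow>
     (\<forall>a\<in>Obj G. eta a \<in> Arr H \<and> Dom H (eta a) = f1o a \<and> Cod H (eta a) = f2o a \<and>
        (\<exists>g\<in>Arr H. Dom H g = f2o a \<and> Cod H g = f1o a \<and>
           Comp H g (eta a) = Idt H (f1o a) \<and> Comp H (eta a) g = Idt H (f2o a))) \<and>
     (\<forall>f\<in>Arr G. Comp H (eta (Cod G f)) (f1m f) = Comp H (f2m f) (eta (Dom G f)))"

definition gpd_equivalence ::
  "('o, 'm) gpd \<Rightarrow> ('p, 'n) gpd \<Rightarrow> ('o \<Rightarrow> 'p) \<Rightarrow> ('m \<Rightarrow> 'n) \<Rightarrow> bool" where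
  "gpd_equivalence G H fo fm \<longleftrightarrow>
     gfunctor G H fo fm \<and>
     (\<exists>go gm eta eps. gfunctor H G go gm \<and>
        nat_iso G G id id (go \<circ> fo) (gm \<circ> fm) eta \<and>
        nat_iso H H (fo \<circ> go) (fm \<circ> gm) id id eps)"

section \<open>Diagrams of groupoids over posets of finite sets\<close>

text \<open>A covariant strict 2-functor from a poset P (ordered by inclusion, only identity
  2-cells) to Gpd: groupoids Phi X, functors (Fo X Y, Fm X Y) for X \<subseteq> Y, strictly
  preserving identities and composition.\<close>
definition gpd_diagram ::
  "nat set set \<Rightarrow> (nat set \<Rightarrow> ('o, 'm) gpd) \<Rightarrow> (nat set \<Rightarrow> nat set \<Rightarrow> 'o \<Rightarrow> 'o)
   \<Rightarrow> (nat set \<Rightarrow> nat set \<Rightarrow> 'm \<Rightarrow> 'm) \<Rightarrow> bool" where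
  "gpd_diagram P Phi Fo Fm \<longleftrightarrow>
     (\<forall>X\<in>P. groupoid (Phi X)) \<and>
     (\<forall>X\<in>P. \<forall>Y\<in>P. X \<subseteq> Y \<longrightarrow> gfunctor (Phi X) (Phi Y) (Fo X Y) (Fm X Y)) \<and>
     (\<forall>X\<in>P. (\<forall>a\<in>Obj (Phi X). Fo X X a = a) \<and> (\<forall>f\<in>Arr (Phi X). Fm X X f = f)) \<and>
     (\<forall>X\<in>P. \<forall>Y\<in>P. \<forall>Z\<in>P. X \<subseteq> Y \<longrightarrow> Y \<subseteq> Z \<longrightarrow>
        (\<forall>a\<in>Obj (Phi X). Fo Y Z (Fo X Y a) = Fo X Z a) \<and>
        (\<forall>f\<in>Arr (Phi X). Fm Y Z (Fm X Y f) = Fm X Z f))"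

text \<open>B(V:U) = {X. U \<subseteq> X \<subset> V}; B(V) = B(V:{}).\<close>
definition Bposet :: "nat set \<Rightarrow> nat set \<Rightarrow> nat set set" where
  "Bposet V U = {X. U \<subseteq> X \<and> X \<subset> V}"

section \<open>Groupoids presented by generators and relations\<close>

text \<open>Words in edges and formal inverses: (e, True) is e, (e, False) is e inverse.
  Words are read in the order of travel.\<close>
type_synonym 'e word = "('e \<times> bool) list"

fun wpath :: "'e set \<Rightarrow> ('e \<Rightarrow> 'v) \<Rightarrow> ('e \<Rightarrow> 'v) \<Rightarrow> 'v \<Rightarrow> 'e word \<Rightarrow> 'v \<Rightarrow> bool" where
  "wpath E s t a [] b \<longleftrightarrow> a = b"
| "wpath E s t a ((e, d) # w) b \<longleftrightarrow> e \<in> E \<and>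
     (if d then s e = a \<and> wpath E s t (t e) w b else t e = a \<and> wpath E s t (s e) w b)"

inductive wequiv :: "'e set \<Rightarrow> ('e \<Rightarrow> 'v) \<Rightarrow> ('e \<Rightarrow> 'v) \<Rightarrow> ('e word \<times> 'e word) set
    \<Rightarrow> 'v \<Rightarrow> 'v \<Rightarrow> 'e word \<Rightarrow> 'e word \<Rightarrow> bool"
  for E s t R where
  refl: "wpath E s t a w b \<Longrightarrow> wequiv E s t R a b w w"
| sym: "wequiv E s t R a b w v \<Longrightarrow> wequiv E s t R a b v w"
| trans: "wequiv E s t R a b u v \<Longrightarrow> wequiv E s t R a b v w \<Longrightarrow> wequiv E s t R a b u w"
| cancel: "wpath E s t a (u @ [(e, d), (e, \<not> d)] @ v) b \<Longrightarrow>
     wequiv E s t R a b (u @ [(e, d), (e, \<not> d)] @ v) (u @ v)"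
| rel: "(r, q) \<in> R \<Longrightarrow> wpath E s t a (u @ r @ v) b \<Longrightarrow> wpath E s t a (u @ q @ v) b \<Longrightarrow>
     wequiv E s t R a b (u @ r @ v) (u @ q @ v)"

definition wclass :: "'e set \<Rightarrow> ('e \<Rightarrow> 'v) \<Rightarrow> ('e \<Rightarrow> 'v) \<Rightarrow> ('e word \<times> 'e word) set
    \<Rightarrow> 'v \<Rightarrow> 'v \<Rightarrow> 'e word \<Rightarrow> 'e word set" where
  "wclass E s t R a b w = {w'. wequiv E s t R a b w w'}"

text \<open>The groupoid presented by the graph (V, E, s, t) and relations R. An arrow is a
  triple (a, b, class of a path from a to b).\<close>
definition pres_gpd :: "'v set \<Rightarrow> 'e set \<Rightarrow> ('e \<Rightarrow> 'v) \<Rightarrow> ('e \<Rightarrow> 'v)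
    \<Rightarrow> ('e word \<times> 'e word) set \<Rightarrow> ('v, 'v \<times> 'v \<times> 'e word set) gpd" where
  "pres_gpd V E s t R =
    \<lparr> Obj = V,
      Arr = {(a, b, wclass E s t R a b w) | a b w. a \<in> V \<and> b \<in> V \<and> wpath E s t a w b},
      Dom = (\<lambda>(a, b, W). a),
      Cod = (\<lambda>(a, b, W). b),
      Comp = (\<lambda>(b', c, W2) (a, b, W1).
                (a, c, wclass E s t R a c ((SOME w. w \<in> W1) @ (SOME w. w \<in> W2)))),
      Idt = (\<lambda>a. (a, a, wclass E s t R a a [])) \<rparr>"

definition winv :: "'f word \<Rightarrow> 'f word" where
  "winv w = rev (map (\<lambda>(e, d). (e, \<not> d)) w)"

definition wlift :: "('e \<Rightarrow> 'f word) \<Rightarrow> 'e word \<Rightarrow> 'f word" where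
  "wlift h w = concat (map (\<lambda>(e, d). if d then h e else winv (h e)) w)"

definition pres_fun_arr :: "'f set \<Rightarrow> ('f \<Rightarrow> 'w) \<Rightarrow> ('f \<Rightarrow> 'w) \<Rightarrow> ('f word \<times> 'f word) set
    \<Rightarrow> ('v \<Rightarrow> 'w) \<Rightarrow> ('e \<Rightarrow> 'f word) \<Rightarrow> 'v \<times> 'v \<times> 'e word set \<Rightarrow> 'w \<times> 'w \<times> 'f word set" where
  "pres_fun_arr E' s' t' R' ho h =
     (\<lambda>(a, b, W). (ho a, ho b, wclass E' s' t' R' (ho a) (ho b) (wlift h (SOME w. w \<in> W))))"

section \<open>colim and 2colim of a diagram of groupoids\<close>

context
  fixes P :: "nat set set"
    and Phi :: "nat set \<Rightarrow> ('o, 'm) gpd"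
    and Fo :: "nat set \<Rightarrow> nat set \<Rightarrow> 'o \<Rightarrow> 'o"
    and Fm :: "nat set \<Rightarrow> nat set \<Rightarrow> 'm \<Rightarrow> 'm"
begin

text \<open>Objects of the Grothendieck construction: pairs (X, x) with x an object of Phi X.\<close>
definition tot_obj :: "(nat set \<times> 'o) set" where
  "tot_obj = {(X, x). X \<in> P \<and> x \<in> Obj (Phi X)}"

definition obj_rel :: "((nat set \<times> 'o) \<times> (nat set \<times> 'o)) set" where
  "obj_rel = (let S = {((X, x), (Y, Fo X Y x)) | X Y x. X \<in> P \<and> Y \<in> P \<and> X \<subseteq> Y \<and> x \<in> Obj (Phi X)}
              in (S \<union> S\<inverse>)\<^sup>*)"

definition colim_V :: "(nat set \<times> 'o) set set" where
  "colim_V = tot_obj // obj_rel"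

definition colim_E :: "(nat set \<times> 'm) set" where
  "colim_E = {(X, f). X \<in> P \<and> f \<in> Arr (Phi X)}"

definition colim_s :: "nat set \<times> 'm \<Rightarrow> (nat set \<times> 'o) set" where
  "colim_s = (\<lambda>(X, f). obj_rel `` {(X, Dom (Phi X) f)})"

definition colim_t :: "nat set \<times> 'm \<Rightarrow> (nat set \<times> 'o) set" where
  "colim_t = (\<lambda>(X, f). obj_rel `` {(X, Cod (Phi X) f)})"

definition colim_R :: "((nat set \<times> 'm) word \<times> (nat set \<times> 'm) word) set" where
  "colim_R =
     {([((X, f), True), ((X, g), True)], [((X, Comp (Phi X) g f), True)]) | X f g.
        X \<in> P \<and> f \<in> Arr (Phi X) \<and> g \<in> Arr (Phi X) \<and> Cod (Phi X) f = Dom (Phi X) g} \<union>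
     {([((X, Idt (Phi X) x), True)], []) | X x. X \<in> P \<and> x \<in> Obj (Phi X)} \<union>
     {([((X, f), True)], [((Y, Fm X Y f), True)]) | X Y f.
        X \<in> P \<and> Y \<in> P \<and> X \<subseteq> Y \<and> f \<in> Arr (Phi X)}"

definition colim :: "((nat set \<times> 'o) set,
    (nat set \<times> 'o) set \<times> (nat set \<times> 'o) set \<times> (nat set \<times> 'm) word set) gpd" where
  "colim = pres_gpd colim_V colim_E colim_s colim_t colim_R"

definition canon_obj :: "nat set \<Rightarrow> (nat set \<times> 'o) set \<Rightarrow> 'o" where
  "canon_obj V c = (case (SOME p. p \<in> c) of (X, x) \<Rightarrow> Fo X V x)"

subsection \<open>The 2-colimit: the Grothendieck construction with all morphisms inverted\<close>

text \<open>Morphisms of the Grothendieck construction: (X, x, Y, f) : (X, x) \<rightarrow> (Y, Cod f)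
  with X \<subseteq> Y and f : Fo X Y x \<rightarrow> _ in Phi Y.\<close>
definition groth_E :: "(nat set \<times> 'o \<times> nat set \<times> 'm) set" where
  "groth_E = {(X, x, Y, f). X \<in> P \<and> Y \<in> P \<and> X \<subseteq> Y \<and> x \<in> Obj (Phi X) \<and>
                f \<in> Arr (Phi Y) \<and> Dom (Phi Y) f = Fo X Y x}"

definition groth_s :: "nat set \<times> 'o \<times> nat set \<times> 'm \<Rightarrow> nat set \<times> 'o" where
  "groth_s = (\<lambda>(X, x, Y, f). (X, x))"

definition groth_t :: "nat set \<times> 'o \<times> nat set \<times> 'm \<Rightarrow> nat set \<times> 'o" where
  "groth_t = (\<lambda>(X, x, Y, f). (Y, Cod (Phi Y) f))"

definition groth_R :: "((nat set \<times> 'o \<times> nat set \<times> 'm) word \<times> (nat set \<times> 'o \<times> nat set \<times> 'm) word) set" where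
  "groth_R =
     {([((X, x, Y, f), True), ((Y, Cod (Phi Y) f, Z, g), True)],
       [((X, x, Z, Comp (Phi Z) g (Fm Y Z f)), True)]) | X x Y f Z g.
        (X, x, Y, f) \<in> groth_E \<and> (Y, Cod (Phi Y) f, Z, g) \<in> groth_E} \<union>
     {([((X, x, X, Idt (Phi X) x), True)], []) | X x. X \<in> P \<and> x \<in> Obj (Phi X)}"

definition twocolim :: "(nat set \<times> 'o,
    (nat set \<times> 'o) \<times> (nat set \<times> 'o) \<times> (nat set \<times> 'o \<times> nat set \<times> 'm) word set) gpd" where
  "twocolim = pres_gpd tot_obj groth_E groth_s groth_t groth_R"

definition delta_obj :: "nat set \<times> 'o \<Rightarrow> (nat set \<times> 'o) set" where
  "delta_obj p = obj_rel `` {p}"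

definition delta_arr ::
  "(nat set \<times> 'o) \<times> (nat set \<times> 'o) \<times> (nat set \<times> 'o \<times> nat set \<times> 'm) word set
   \<Rightarrow> (nat set \<times> 'o) set \<times> (nat set \<times> 'o) set \<times> (nat set \<times> 'm) word set" where
  "delta_arr = pres_fun_arr colim_E colim_s colim_t colim_R delta_obj
                 (\<lambda>(X, x, Y, f). [((Y, f), True)])"

end

text \<open>Condition A^V_U: the canonical functor colim over B(V:U) \<rightarrow> Phi V is injective on objects.\<close>
definition condA :: "(nat set \<Rightarrow> ('o, 'm) gpd) \<Rightarrow> (nat set \<Rightarrow> nat set \<Rightarrow> 'o \<Rightarrow> 'o)
    \<Rightarrow> (nat set \<Rightarrow> nat set \<Rightarrow> 'm \<Rightarrow> 'm) \<Rightarrow> nat set \<Rightarrow> nat set \<Rightarrow> bool" where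
  "condA Phi Fo Fm V U \<longleftrightarrow>
     inj_on (canon_obj Fo V) (Obj (colim (Bposet V U) Phi Fo Fm))"

end

theory Submission
  imports Defs
begin


section \<open>Abstract groupoid algebra\<close>

locale gpdl =
  fixes G :: "('o, 'm) gpd"
  assumes gpd: "groupoid G"
begin

lemma dom_cod[simp]: "f \<in> Arr G \<Longrightarrow> Dom G f \<in> Obj G" "f \<in> Arr G \<Longrightarrow> Cod G f \<in> Obj G"
  using gpd unfolding groupoid_def by auto

lemma idt[simp]: "a \<in> Obj G \<Longrightarrow> Idt G a \<in> Arr G" "a \<in> Obj G \<Longrightarrow> Dom G (Idt G a) = a"
  "a \<in> Obj G \<Longrightarrow> Cod G (Idt G a) = a"
  using gpd unfolding groupoid_def by auto

lemma comp_arr[simp]: "f \<in> Arr G \<Longrightarrow> g \<in> Arr G \<Longrightarrow> Cod G f = Dom G g \<Longrightarrow> Comp G g f \<in> Arr G"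
  using gpd unfolding groupoid_def by auto
lemma comp_dom[simp]: "f \<in> Arr G \<Longrightarrow> g \<in> Arr G \<Longrightarrow> Cod G f = Dom G g \<Longrightarrow> Dom G (Comp G g f) = Dom G f"
  using gpd unfolding groupoid_def by auto
lemma comp_cod[simp]: "f \<in> Arr G \<Longrightarrow> g \<in> Arr G \<Longrightarrow> Cod G f = Dom G g \<Longrightarrow> Cod G (Comp G g f) = Cod G g"
  using gpd unfolding groupoid_def by auto

lemma idr[simp]: "f \<in> Arr G \<Longrightarrow> Comp G f (Idt G (Dom G f)) = f"
  using gpd unfolding groupoid_def by auto
lemma idl[simp]: "f \<in> Arr G \<Longrightarrow> Comp G (Idt G (Cod G f)) f = f"
  using gpd unfolding groupoid_def by auto
lemma idr'[simp]: "f \<in> Arr G \<Longrightarrow> Dom G f = a \<Longrightarrow> Comp G f (Idt G a) = f"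
  by auto
lemma idl'[simp]: "f \<in> Arr G \<Longrightarrow> Cod G f = a \<Longrightarrow> Comp G (Idt G a) f = f"
  by auto

lemma assoc: "f \<in> Arr G \<Longrightarrow> g \<in> Arr G \<Longrightarrow> h \<in> Arr G \<Longrightarrow> Cod G f = Dom G g \<Longrightarrow> Cod G g = Dom G h \<Longrightarrow>
   Comp G h (Comp G g f) = Comp G (Comp G h g) f"
  using gpd unfolding groupoid_def by blast

definition ginv :: "'m \<Rightarrow> 'm" where
  "ginv f = (SOME g. g \<in> Arr G \<and> Dom G g = Cod G f \<and> Cod G g = Dom G f \<and>
        Comp G g f = Idt G (Dom G f) \<and> Comp G f g = Idt G (Cod G f))"

lemma ginv_props: assumes "f \<in> Arr G"
  shows "ginv f \<in> Arr G \<and> Dom G (ginv f) = Cod G f \<and> Cod G (ginv f) = Dom G f \<and>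
        Comp G (ginv f) f = Idt G (Dom G f) \<and> Comp G f (ginv f) = Idt G (Cod G f)"
proof -
  have "\<exists>g. g \<in> Arr G \<and> Dom G g = Cod G f \<and> Cod G g = Dom G f \<and>
        Comp G g f = Idt G (Dom G f) \<and> Comp G f g = Idt G (Cod G f)"
    using gpd assms unfolding groupoid_def by blast
  then show ?thesis unfolding ginv_def by (rule someI_ex)
qed

lemma ginv_arr[simp]: "f \<in> Arr G \<Longrightarrow> ginv f \<in> Arr G"
  and ginv_dom[simp]: "f \<in> Arr G \<Longrightarrow> Dom G (ginv f) = Cod G f"
  and ginv_cod[simp]: "f \<in> Arr G \<Longrightarrow> Cod G (ginv f) = Dom G f"
  and ginv_l[simp]: "f \<in> Arr G \<Longrightarrow> Comp G (ginv f) f = Idt G (Dom G f)"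
  and ginv_r[simp]: "f \<in> Arr G \<Longrightarrow> Comp G f (ginv f) = Idt G (Cod G f)"
  using ginv_props by auto

lemma cancel_r: assumes "f \<in> Arr G" "g \<in> Arr G" "h \<in> Arr G" "Cod G h = Dom G f" "Cod G h = Dom G g"
  and "Comp G f h = Comp G g h" shows "f = g"
proof -
  have "f = Comp G f (Comp G h (ginv h))" using assms(1-5) by simp
  also have "\<dots> = Comp G (Comp G f h) (ginv h)" using assms(1-5) by (intro assoc) auto
  also have "\<dots> = Comp G (Comp G g h) (ginv h)" by (simp only: assms(6))
  also have "\<dots> = Comp G g (Comp G h (ginv h))" using assms(1-5) by (intro assoc[symmetric]) auto
  also have "\<dots> = g" using assms(1-5) by simp
  finally show ?thesis .
qed

lemma cancel_l: assumes "f \<in> Arr G" "g \<in> Arr G" "h \<in> Arr G" "Cod G f = Dom G h" "Cod G g = Dom G h"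
  and "Comp G h f = Comp G h g" shows "f = g"
proof -
  have "f = Comp G (Comp G (ginv h) h) f" using assms(1-5) by simp
  also have "\<dots> = Comp G (ginv h) (Comp G h f)" using assms(1-5) by (intro assoc[symmetric]) auto
  also have "\<dots> = Comp G (ginv h) (Comp G h g)" by (simp only: assms(6))
  also have "\<dots> = Comp G (Comp G (ginv h) h) g" using assms(1-5) by (intro assoc) auto
  also have "\<dots> = g" using assms(1-5) by simp
  finally show ?thesis .
qed

lemma ginv_unique: assumes "f \<in> Arr G" "g \<in> Arr G" "Dom G g = Cod G f" "Comp G g f = Idt G (Dom G f)"
  shows "ginv f = g"
proof (rule cancel_r[of "ginv f" g f])
  show "Comp G (ginv f) f = Comp G g f" using assms(1,4) by (simp only: ginv_l)
qed (use assms in auto)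

lemma ginv_idt[simp]: "a \<in> Obj G \<Longrightarrow> ginv (Idt G a) = Idt G a"
  by (rule ginv_unique) auto

lemma ginv_ginv[simp]: "f \<in> Arr G \<Longrightarrow> ginv (ginv f) = f"
  by (rule ginv_unique) auto

lemma ginv_comp: assumes "f \<in> Arr G" "g \<in> Arr G" "Cod G f = Dom G g"
  shows "ginv (Comp G g f) = Comp G (ginv f) (ginv g)"
proof (rule ginv_unique)
  have "Comp G (Comp G (ginv f) (ginv g)) (Comp G g f) = Comp G (ginv f) (Comp G (ginv g) (Comp G g f))"
    using assms by (intro assoc[symmetric]) auto
  also have "\<dots> = Comp G (ginv f) (Comp G (Comp G (ginv g) g) f)"
    using assms by (subst assoc) auto
  also have "\<dots> = Idt G (Dom G f)" using assms by simp
  finally show "Comp G (Comp G (ginv f) (ginv g)) (Comp G g f) = Idt G (Dom G (Comp G g f))"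
    using assms by simp
qed (use assms in auto)

lemma comp_eq_ginv: assumes "f \<in> Arr G" "g \<in> Arr G" "Cod G f = Dom G g"
  shows "Comp G (Comp G g f) (ginv f) = g"
proof -
  have "Comp G (Comp G g f) (ginv f) = Comp G g (Comp G f (ginv f))"
    using assms by (intro assoc[symmetric]) auto
  also have "\<dots> = g" using assms by simp
  finally show ?thesis .
qed

lemma comp_ginv_eq: assumes "f \<in> Arr G" "g \<in> Arr G" "Dom G g = Dom G f"
  shows "Comp G (Comp G g (ginv f)) f = g"
proof -
  have "Comp G (Comp G g (ginv f)) f = Comp G g (Comp G (ginv f) f)"
    using assms by (intro assoc[symmetric]) auto
  also have "\<dots> = g" using assms by simp
  finally show ?thesis .
qed

end

lemma gfunctorD:
  assumes "gfunctor G H fo fm"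
  shows "a \<in> Obj G \<Longrightarrow> fo a \<in> Obj H"
    and "f \<in> Arr G \<Longrightarrow> fm f \<in> Arr H"
    and "f \<in> Arr G \<Longrightarrow> Dom H (fm f) = fo (Dom G f)"
    and "f \<in> Arr G \<Longrightarrow> Cod H (fm f) = fo (Cod G f)"
    and "a \<in> Obj G \<Longrightarrow> fm (Idt G a) = Idt H (fo a)"
    and "f \<in> Arr G \<Longrightarrow> g \<in> Arr G \<Longrightarrow> Cod G f = Dom G g \<Longrightarrow> fm (Comp G g f) = Comp H (fm g) (fm f)"
  using assms unfolding gfunctor_def by auto

lemma gfunctor_ginv:
  assumes G: "groupoid G" and H: "groupoid H" and F: "gfunctor G H fo fm" and f: "f \<in> Arr G"
  shows "fm (gpdl.ginv G f) = gpdl.ginv H (fm f)"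
proof -
  interpret G: gpdl G by (rule gpdl.intro[OF G])
  interpret H: gpdl H by (rule gpdl.intro[OF H])
  show ?thesis
    using f gfunctorD[OF F]
    by (intro H.ginv_unique[symmetric]) (auto simp: gfunctorD(6)[OF F, symmetric])
qed

lemma gfunctor_comp:
  assumes "gfunctor G H fo fm" "gfunctor H K go gm"
  shows "gfunctor G K (go \<circ> fo) (gm \<circ> fm)"
  using gfunctorD[OF assms(1)] gfunctorD[OF assms(2)] unfolding gfunctor_def by auto

lemma gfunctor_id: "groupoid G \<Longrightarrow> gfunctor G G id id"
proof -
  assume G: "groupoid G"
  interpret gpdl G by (rule gpdl.intro[OF G])
  show ?thesis unfolding gfunctor_def by auto
qed

lemma gfunctor_cong:
  assumes G: "groupoid G" and "gfunctor G H fo fm" "\<And>f. f \<in> Arr G \<Longrightarrow> fm f = fm' f"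
  shows "gfunctor G H fo fm'"
proof -
  interpret gpdl G by (rule gpdl.intro[OF G])
  show ?thesis using assms(2,3) unfolding gfunctor_def by auto
qed



section \<open>Words\<close>

lemma wpath_append: "wpath E s t a (u @ v) b \<longleftrightarrow> (\<exists>c. wpath E s t a u c \<and> wpath E s t c v b)"
proof (induction u arbitrary: a)
  case (Cons x u)
  obtain e d where x: "x = (e, d)" by (cases x)
  show ?case unfolding x by (cases d) (simp_all add: Cons.IH)
qed simp

lemma wpath_det: "wpath E s t a u b \<Longrightarrow> wpath E s t a u c \<Longrightarrow> b = c"
  by (induction u arbitrary: a) (auto split: if_splits)

lemma wpath_appendI: "wpath E s t a u c \<Longrightarrow> wpath E s t c v b \<Longrightarrow> wpath E s t a (u @ v) b"
  using wpath_append by metis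

lemma wequiv_wpath: "wequiv E s t R a b w v \<Longrightarrow> wpath E s t a w b \<and> wpath E s t a v b"
proof (induction rule: wequiv.induct)
  case (cancel a u e d v b)
  then show ?case by (auto simp: wpath_append split: if_splits)
qed auto

lemma wequiv_app_r: "wequiv E s t R a b w w' \<Longrightarrow> wpath E s t b v c \<Longrightarrow> wequiv E s t R a c (w @ v) (w' @ v)"
proof (induction rule: wequiv.induct)
  case (refl a w b)
  then show ?case by (auto intro: wequiv.refl wpath_appendI)
next
  case (sym a b w v')
  then show ?case by (auto intro: wequiv.sym)
next
  case (trans a b u v' w)
  then show ?case by (auto intro: wequiv.trans)
next
  case (cancel a u e d v' b)
  have "wequiv E s t R a c (u @ [(e, d), (e, \<not> d)] @ (v' @ v)) (u @ (v' @ v))"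
    by (rule wequiv.cancel) (use wpath_appendI[OF cancel.hyps cancel.prems] in simp)
  then show ?case by simp
next
  case (rel r q a u v' b)
  have "wequiv E s t R a c (u @ r @ (v' @ v)) (u @ q @ (v' @ v))"
    by (rule wequiv.rel) (use rel.hyps wpath_appendI[OF rel.hyps(2) rel.prems] wpath_appendI[OF rel.hyps(3) rel.prems] in simp_all)
  then show ?case by simp
qed

lemma wequiv_app_l: "wequiv E s t R a b w w' \<Longrightarrow> wpath E s t c v a \<Longrightarrow> wequiv E s t R c b (v @ w) (v @ w')"
proof (induction rule: wequiv.induct)
  case (refl a w b)
  then show ?case by (auto intro: wequiv.refl wpath_appendI)
next
  case (sym a b w v')
  then show ?case by (auto intro: wequiv.sym)
next
  case (trans a b u v' w)
  then show ?case by (auto intro: wequiv.trans)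
next
  case (cancel a u e d v' b)
  have "wequiv E s t R c b ((v @ u) @ [(e, d), (e, \<not> d)] @ v') ((v @ u) @ v')"
    by (rule wequiv.cancel) (use wpath_appendI[OF cancel.prems cancel.hyps] in simp)
  then show ?case by simp
next
  case (rel r q a u v' b)
  have "wequiv E s t R c b ((v @ u) @ r @ v') ((v @ u) @ q @ v')"
    by (rule wequiv.rel) (use rel.hyps wpath_appendI[OF rel.prems rel.hyps(2)] wpath_appendI[OF rel.prems rel.hyps(3)] in simp_all)
  then show ?case by simp
qed

lemma wequiv_app: "wequiv E s t R a b w w' \<Longrightarrow> wequiv E s t R b c v v' \<Longrightarrow> wequiv E s t R a c (w @ v) (w' @ v')"
  by (meson wequiv.trans wequiv_app_l wequiv_app_r wequiv_wpath)

lemma wequiv_refl: "wpath E s t a w b \<Longrightarrow> wequiv E s t R a b w w"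
  by (rule wequiv.refl)

lemma winv_Nil[simp]: "winv [] = []"
  and winv_Cons[simp]: "winv ((e, d) # w) = winv w @ [(e, \<not> d)]"
  and winv_append[simp]: "winv (u @ v) = winv v @ winv u"
  by (auto simp: winv_def)

lemma winv_winv[simp]: "winv (winv w) = w"
  by (induction w) auto

lemma wpath_winv: "wpath E s t a w b \<Longrightarrow> wpath E s t b (winv w) a"
proof (induction w arbitrary: a)
  case (Cons x w)
  then show ?case by (cases x) (auto simp: wpath_append split: if_splits)
qed simp

lemma wequiv_winv_r: "wpath E s t a w b \<Longrightarrow> wequiv E s t R a a (w @ winv w) []"
proof (induction w arbitrary: a)
  case Nil
  then show ?case by (auto intro: wequiv.refl)
next
  case (Cons x w)
  obtain e d where x: "x = (e, d)" by (cases x)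
  define c where "c = (if d then t e else s e)"
  have ed: "e \<in> E" and a: "a = (if d then s e else t e)" and wc: "wpath E s t c w b"
    using Cons.prems by (auto simp: x c_def split: if_splits)
  have ih: "wequiv E s t R c c (w @ winv w) []" using Cons.IH wc by blast
  have p1: "wpath E s t a [(e, d)] c" using ed a by (auto simp: c_def)
  have p2: "wpath E s t c [(e, \<not> d)] a" using ed a by (auto simp: c_def)
  have "wequiv E s t R a a ([(e, d)] @ (w @ winv w) @ [(e, \<not> d)]) ([(e, d)] @ [] @ [(e, \<not> d)])"
    by (rule wequiv_app[OF wequiv_refl[OF p1] wequiv_app[OF ih wequiv_refl[OF p2]]])
  moreover have "wequiv E s t R a a ([] @ [(e, d), (e, \<not> d)] @ []) ([] @ [])"
    by (rule wequiv.cancel) (use wpath_appendI[OF p1 p2] in simp)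
  ultimately show ?case unfolding x by (auto intro: wequiv.trans)
qed

lemma wequiv_winv_l: "wpath E s t a w b \<Longrightarrow> wequiv E s t R b b (winv w @ w) []"
  using wequiv_winv_r[OF wpath_winv, of E s t a w b R] by simp

lemma wclass_mem: "wpath E s t a w b \<Longrightarrow> w \<in> wclass E s t R a b w"
  by (auto simp: wclass_def intro: wequiv.refl)

lemma wclass_eq_iff: "wpath E s t a w b \<Longrightarrow> wclass E s t R a b w = wclass E s t R a b w' \<longleftrightarrow> wequiv E s t R a b w w'"
proof
  assume p: "wpath E s t a w b" and "wclass E s t R a b w = wclass E s t R a b w'"
  then have "w \<in> wclass E s t R a b w'" using wclass_mem[OF p, of R] by simp
  then show "wequiv E s t R a b w w'" unfolding wclass_def by (auto intro: wequiv.sym)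
next
  assume "wequiv E s t R a b w w'"
  then show "wclass E s t R a b w = wclass E s t R a b w'"
    unfolding wclass_def by (auto intro: wequiv.sym wequiv.trans)
qed

lemma wclass_eqI: "wequiv E s t R a b w w' \<Longrightarrow> wclass E s t R a b w = wclass E s t R a b w'"
  using wclass_eq_iff wequiv_wpath by metis

lemma some_wclass: "wpath E s t a w b \<Longrightarrow> wequiv E s t R a b w (SOME w'. w' \<in> wclass E s t R a b w)"
  using someI[of "\<lambda>w'. w' \<in> wclass E s t R a b w", OF wclass_mem] unfolding wclass_def by auto

lemma wclass_some: "wpath E s t a w b \<Longrightarrow> wclass E s t R a b (SOME w'. w' \<in> wclass E s t R a b w) = wclass E s t R a b w"
  using some_wclass wclass_eqI wequiv.sym by metis



section \<open>Presented groupoids\<close>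

locale presl =
  fixes V :: "'v set" and E :: "'e set" and s t :: "'e \<Rightarrow> 'v" and R :: "('e word \<times> 'e word) set"
begin

abbreviation "PG \<equiv> pres_gpd V E s t R"
abbreviation "cls \<equiv> wclass E s t R"
abbreviation "wp \<equiv> wpath E s t"
abbreviation "weq \<equiv> wequiv E s t R"

lemma PG_simps[simp]: "Obj PG = V" "Dom PG (a, b, W) = a" "Cod PG (a, b, W) = b"
  "Idt PG a = (a, a, cls a a [])"
  by (auto simp: pres_gpd_def)

lemma PG_arr: "x \<in> Arr PG \<longleftrightarrow> (\<exists>a b w. x = (a, b, cls a b w) \<and> a \<in> V \<and> b \<in> V \<and> wp a w b)"
  by (auto simp: pres_gpd_def)

lemma PG_arrI: "a \<in> V \<Longrightarrow> b \<in> V \<Longrightarrow> wp a w b \<Longrightarrow> (a, b, cls a b w) \<in> Arr PG"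
  by (auto simp: PG_arr)

lemma PG_arrE: assumes "x \<in> Arr PG"
  obtains a b w where "x = (a, b, cls a b w)" "a \<in> V" "b \<in> V" "wp a w b"
  using assms by (auto simp: PG_arr)

lemma PG_comp: "wp a w1 b \<Longrightarrow> wp b w2 c \<Longrightarrow>
    Comp PG (b, c, cls b c w2) (a, b, cls a b w1) = (a, c, cls a c (w1 @ w2))"
proof -
  assume p: "wp a w1 b" "wp b w2 c"
  have "weq a c ((SOME w. w \<in> cls a b w1) @ (SOME w. w \<in> cls b c w2)) (w1 @ w2)"
    using wequiv_app[OF wequiv.sym[OF some_wclass[OF p(1)]] wequiv.sym[OF some_wclass[OF p(2)]]] .
  then show ?thesis unfolding pres_gpd_def using wclass_eqI by simp
qed

lemma PG_eq: "wp a w b \<Longrightarrow> (a, b, cls a b w) = (a, b, cls a b w') \<longleftrightarrow> weq a b w w'"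
  by (simp add: wclass_eq_iff)

lemma groupoid_PG: "groupoid PG"
proof -
  have A1: "\<forall>f\<in>Arr PG. Dom PG f \<in> Obj PG \<and> Cod PG f \<in> Obj PG"
    by (auto elim!: PG_arrE)
  have A2: "\<forall>a\<in>Obj PG. Idt PG a \<in> Arr PG \<and> Dom PG (Idt PG a) = a \<and> Cod PG (Idt PG a) = a"
    by (auto intro: PG_arrI)
  have A3: "\<forall>f\<in>Arr PG. \<forall>g\<in>Arr PG. Cod PG f = Dom PG g \<longrightarrow>
        Comp PG g f \<in> Arr PG \<and> Dom PG (Comp PG g f) = Dom PG f \<and> Cod PG (Comp PG g f) = Cod PG g"
  proof (intro ballI impI)
    fix f g assume "f \<in> Arr PG" "g \<in> Arr PG" "Cod PG f = Dom PG g"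
    then obtain a b w b' c v where f: "f = (a, b, cls a b w)" "a \<in> V" "b \<in> V" "wp a w b"
      and g: "g = (b', c, cls b' c v)" "b' \<in> V" "c \<in> V" "wp b' v c" and bb: "b = b'"
      by (metis PG_arrE PG_simps(2,3))
    show "Comp PG g f \<in> Arr PG \<and> Dom PG (Comp PG g f) = Dom PG f \<and> Cod PG (Comp PG g f) = Cod PG g"
      using f g bb PG_comp[of a w b v c] by (auto intro!: PG_arrI wpath_appendI)
  qed
  have A4: "\<forall>f\<in>Arr PG. Comp PG f (Idt PG (Dom PG f)) = f \<and> Comp PG (Idt PG (Cod PG f)) f = f"
  proof
    fix f assume "f \<in> Arr PG"
    then obtain a b w where f: "f = (a, b, cls a b w)" "a \<in> V" "b \<in> V" "wp a w b" by (rule PG_arrE)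
    show "Comp PG f (Idt PG (Dom PG f)) = f \<and> Comp PG (Idt PG (Cod PG f)) f = f"
      using f PG_comp[of a "[]" a w b] PG_comp[of a w b "[]" b] by simp
  qed
  have A5: "\<forall>f\<in>Arr PG. \<forall>g\<in>Arr PG. \<forall>h\<in>Arr PG. Cod PG f = Dom PG g \<longrightarrow> Cod PG g = Dom PG h \<longrightarrow>
        Comp PG h (Comp PG g f) = Comp PG (Comp PG h g) f"
  proof (intro ballI impI)
    fix f g h assume "f \<in> Arr PG" "g \<in> Arr PG" "h \<in> Arr PG" "Cod PG f = Dom PG g" "Cod PG g = Dom PG h"
    then obtain a b w c v d u where f: "f = (a, b, cls a b w)" "wp a w b"
      and g: "g = (b, c, cls b c v)" "wp b v c" and h: "h = (c, d, cls c d u)" "wp c u d"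
      by (metis PG_arrE PG_simps(2,3))
    have "Comp PG h (Comp PG g f) = (a, d, cls a d (w @ v @ u))"
      using f g h PG_comp[of a w b v c] PG_comp[of a "w @ v" c u d] wpath_appendI[OF f(2) g(2)] by simp
    moreover have "Comp PG (Comp PG h g) f = (a, d, cls a d (w @ v @ u))"
      using f g h PG_comp[of b v c u d] PG_comp[of a w b "v @ u" d] wpath_appendI[OF g(2) h(2)] by simp
    ultimately show "Comp PG h (Comp PG g f) = Comp PG (Comp PG h g) f" by simp
  qed
  have A6: "\<forall>f\<in>Arr PG. \<exists>g\<in>Arr PG. Dom PG g = Cod PG f \<and> Cod PG g = Dom PG f \<and>
        Comp PG g f = Idt PG (Dom PG f) \<and> Comp PG f g = Idt PG (Cod PG f)"
  proof
    fix f assume "f \<in> Arr PG"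
    then obtain a b w where f: "f = (a, b, cls a b w)" "a \<in> V" "b \<in> V" "wp a w b" by (rule PG_arrE)
    let ?g = "(b, a, cls b a (winv w))"
    have pi: "wp b (winv w) a" using f wpath_winv by metis
    have "?g \<in> Arr PG" using f pi by (intro PG_arrI) auto
    moreover have "Comp PG ?g f = Idt PG (Dom PG f)"
      using f pi PG_comp[of a w b "winv w" a] wclass_eqI[OF wequiv_winv_r[OF f(4)]] by simp
    moreover have "Comp PG f ?g = Idt PG (Cod PG f)"
      using f pi PG_comp[of b "winv w" a w b] wclass_eqI[OF wequiv_winv_l[OF f(4)]] by simp
    ultimately show "\<exists>g\<in>Arr PG. Dom PG g = Cod PG f \<and> Cod PG g = Dom PG f \<and>
        Comp PG g f = Idt PG (Dom PG f) \<and> Comp PG f g = Idt PG (Cod PG f)"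
      using f by (intro bexI[of _ ?g]) auto
  qed
  show ?thesis unfolding groupoid_def using A1 A2 A3 A4 A5 A6 by blast
qed

sublocale PGL: gpdl PG
  by (rule gpdl.intro[OF groupoid_PG])

lemma PG_ginv: "a \<in> V \<Longrightarrow> b \<in> V \<Longrightarrow> wp a w b \<Longrightarrow> PGL.ginv (a, b, cls a b w) = (b, a, cls b a (winv w))"
  apply (rule PGL.ginv_unique)
  using PG_comp[of a w b "winv w" a] wclass_eqI[OF wequiv_winv_r, of E s t a w b R]
  by (auto intro!: PG_arrI wpath_winv)

definition gen :: "'e \<Rightarrow> 'v \<times> 'v \<times> 'e word set" where
  "gen e = (s e, t e, cls (s e) (t e) [(e, True)])"

lemma gen_arr: "e \<in> E \<Longrightarrow> s e \<in> V \<Longrightarrow> t e \<in> V \<Longrightarrow> gen e \<in> Arr PG"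
  unfolding gen_def by (rule PG_arrI) auto

end



context gpdl
begin

lemma nat_comp:
  assumes ar: "x1 \<in> Arr G" "y1 \<in> Arr G" "x2 \<in> Arr G" "y2 \<in> Arr G" "ea \<in> Arr G" "eb \<in> Arr G" "ec \<in> Arr G"
    and d: "Cod G x1 = Dom G y1" "Cod G x2 = Dom G y2" "Dom G eb = Cod G x1" "Cod G eb = Dom G y2"
      "Dom G ec = Cod G y1" "Cod G ea = Dom G x2"
    and n1: "Comp G eb x1 = Comp G x2 ea" and n2: "Comp G ec y1 = Comp G y2 eb"
  shows "Comp G ec (Comp G y1 x1) = Comp G (Comp G y2 x2) ea"
proof -
  have "Comp G ec (Comp G y1 x1) = Comp G (Comp G ec y1) x1" using ar d by (intro assoc) auto
  also have "\<dots> = Comp G (Comp G y2 eb) x1" by (simp only: n2)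
  also have "\<dots> = Comp G y2 (Comp G eb x1)" using ar d by (intro assoc[symmetric]) auto
  also have "\<dots> = Comp G y2 (Comp G x2 ea)" by (simp only: n1)
  also have "\<dots> = Comp G (Comp G y2 x2) ea" using ar d by (intro assoc) auto
  finally show ?thesis .
qed

lemma nat_inv:
  assumes ar: "x1 \<in> Arr G" "x2 \<in> Arr G" "ea \<in> Arr G" "eb \<in> Arr G"
    and d: "Dom G eb = Cod G x1" "Cod G eb = Cod G x2" "Dom G ea = Dom G x1" "Cod G ea = Dom G x2"
    and n: "Comp G eb x1 = Comp G x2 ea"
  shows "Comp G ea (ginv x1) = Comp G (ginv x2) eb"
proof (rule cancel_r[of _ _ x1])
  have "Comp G (Comp G (ginv x2) eb) x1 = Comp G (ginv x2) (Comp G eb x1)"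
    using ar d by (intro assoc[symmetric]) auto
  also have "\<dots> = Comp G (ginv x2) (Comp G x2 ea)" by (simp only: n)
  also have "\<dots> = ea" using ar d by (simp add: assoc)
  finally show "Comp G (Comp G ea (ginv x1)) x1 = Comp G (Comp G (ginv x2) eb) x1"
    using ar d by (simp add: comp_ginv_eq)
qed (use ar d in auto)

end

lemma (in presl) wp_V:
  "(\<And>e. e \<in> E \<Longrightarrow> s e \<in> V \<and> t e \<in> V) \<Longrightarrow> wp a w b \<Longrightarrow> a \<in> V \<Longrightarrow> b \<in> V"
proof (induction w arbitrary: a)
  case (Cons x w)
  then show ?case by (cases x) (auto split: if_splits)
qed simp

section \<open>Evaluation of words in a groupoid\<close>

fun weval :: "('p, 'n) gpd \<Rightarrow> ('e \<Rightarrow> 'v) \<Rightarrow> ('e \<Rightarrow> 'v) \<Rightarrow> ('v \<Rightarrow> 'p) \<Rightarrow> ('e \<Rightarrow> 'n) \<Rightarrow> 'v \<Rightarrow> 'e word \<Rightarrow> 'n" where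
  "weval H s t ho hg a [] = Idt H (ho a)"
| "weval H s t ho hg a ((e, d) # w) =
     (if d then Comp H (weval H s t ho hg (t e) w) (hg e)
      else Comp H (weval H s t ho hg (s e) w) (gpdl.ginv H (hg e)))"

locale presev = presl V E s t R
  for V :: "'v set" and E :: "'e set" and s t :: "'e \<Rightarrow> 'v" and R :: "('e word \<times> 'e word) set" +
  fixes H :: "('p, 'n) gpd" and ho :: "'v \<Rightarrow> 'p" and hg :: "'e \<Rightarrow> 'n"
  assumes H: "groupoid H"
    and st: "\<And>e. e \<in> E \<Longrightarrow> s e \<in> V \<and> t e \<in> V"
    and ho: "\<And>a. a \<in> V \<Longrightarrow> ho a \<in> Obj H"
    and hg: "\<And>e. e \<in> E \<Longrightarrow> hg e \<in> Arr H \<and> Dom H (hg e) = ho (s e) \<and> Cod H (hg e) = ho (t e)"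
    and rel_ok: "\<And>r q a b. (r, q) \<in> R \<Longrightarrow> a \<in> V \<Longrightarrow> wpath E s t a r b \<Longrightarrow> wpath E s t a q b \<Longrightarrow>
         weval H s t ho hg a r = weval H s t ho hg a q"
begin

sublocale HL: gpdl H by (rule gpdl.intro[OF H])

abbreviation "ev \<equiv> weval H s t ho hg"

lemma wp_V': "wp a w b \<Longrightarrow> a \<in> V \<Longrightarrow> b \<in> V"
  using wp_V st by blast

lemma ev_arr: "wp a w b \<Longrightarrow> a \<in> V \<Longrightarrow> ev a w \<in> Arr H \<and> Dom H (ev a w) = ho a \<and> Cod H (ev a w) = ho b"
proof (induction w arbitrary: a)
  case Nil
  then show ?case using ho by simp
next
  case (Cons x w)
  obtain e d where x: "x = (e, d)" by (cases x)
  show ?case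
  proof (cases d)
    case True
    then have "e \<in> E" "s e = a" "wp (t e) w b" using Cons.prems by (auto simp: x)
    then show ?thesis using Cons.IH[of "t e"] st hg True x by auto
  next
    case False
    then have "e \<in> E" "t e = a" "wp (s e) w b" using Cons.prems by (auto simp: x)
    then show ?thesis using Cons.IH[of "s e"] st hg False x by auto
  qed
qed

lemma ev_append: "wp a u c \<Longrightarrow> wp c v b \<Longrightarrow> a \<in> V \<Longrightarrow> ev a (u @ v) = Comp H (ev c v) (ev a u)"
proof (induction u arbitrary: a)
  case Nil
  then show ?case using ev_arr[of c v b] by simp
next
  case (Cons x u)
  obtain e d where x: "x = (e, d)" by (cases x)
  show ?case
  proof (cases d)
    case True
    then have *: "e \<in> E" "s e = a" "wp (t e) u c" using Cons.prems by (auto simp: x)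
    have V: "t e \<in> V" "c \<in> V" using st * wp_V' by auto
    have "ev a ((x # u) @ v) = Comp H (Comp H (ev c v) (ev (t e) u)) (hg e)"
      using Cons.IH[OF *(3) Cons.prems(2) V(1)] True x by simp
    also have "\<dots> = Comp H (ev c v) (Comp H (ev (t e) u) (hg e))"
      using ev_arr[OF *(3) V(1)] ev_arr[OF Cons.prems(2) V(2)] hg[OF *(1)]
      by (intro HL.assoc[symmetric]) auto
    finally show ?thesis using True x by simp
  next
    case False
    then have *: "e \<in> E" "t e = a" "wp (s e) u c" using Cons.prems by (auto simp: x)
    have V: "s e \<in> V" "c \<in> V" using st * wp_V' by auto
    have "ev a ((x # u) @ v) = Comp H (Comp H (ev c v) (ev (s e) u)) (HL.ginv (hg e))"
      using Cons.IH[OF *(3) Cons.prems(2) V(1)] False x by simp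
    also have "\<dots> = Comp H (ev c v) (Comp H (ev (s e) u) (HL.ginv (hg e)))"
      using ev_arr[OF *(3) V(1)] ev_arr[OF Cons.prems(2) V(2)] hg[OF *(1)]
      by (intro HL.assoc[symmetric]) auto
    finally show ?thesis using False x by simp
  qed
qed

lemma ev_cancel: assumes "wp a [(e, d), (e, \<not> d)] a'" "a \<in> V"
  shows "ev a [(e, d), (e, \<not> d)] = Idt H (ho a)"
proof -
  have e: "e \<in> E" using assms by simp
  show ?thesis
  proof (cases d)
    case True
    then have "a = s e" "a' = s e" using assms by auto
    then show ?thesis using True hg[OF e] st[OF e] ho by (simp add: HL.comp_ginv_eq)
  next
    case False
    then have "a = t e" using assms by auto
    then show ?thesis using False hg[OF e] st[OF e] ho by (simp add: HL.comp_eq_ginv)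
  qed
qed

lemma wpath_start: "wp c v b \<Longrightarrow> wp d v b \<Longrightarrow> d = c"
  by (cases v) (auto split: if_splits)

lemma ev_wequiv: "weq a b w w' \<Longrightarrow> a \<in> V \<Longrightarrow> ev a w = ev a w'"
proof (induction rule: wequiv.induct)
  case (cancel a u e d v b)
  then obtain c c' where p: "wp a u c" "wp c [(e, d), (e, \<not> d)] c'" "wp c' v b"
    by (auto simp: wpath_append simp del: wpath.simps) (metis append_Cons append_Nil wpath_append)
  have cc: "c' = c" using p(2) by (auto split: if_splits)
  have V: "c \<in> V" using wp_V' p cancel by auto
  have p2: "wp c [(e, d), (e, \<not> d)] c" and p3: "wp c v b" using p cc by auto
  have "ev a (u @ ([(e, d), (e, \<not> d)] @ v)) = Comp H (ev c ([(e, d), (e, \<not> d)] @ v)) (ev a u)"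
    by (rule ev_append[OF p(1) wpath_appendI[OF p2 p3] cancel.prems])
  also have "ev c ([(e, d), (e, \<not> d)] @ v) = Comp H (ev c v) (ev c [(e, d), (e, \<not> d)])"
    by (rule ev_append[OF p2 p3 V])
  also have "ev c [(e, d), (e, \<not> d)] = Idt H (ho c)" by (rule ev_cancel[OF p2 V])
  also have "Comp H (ev c v) (Idt H (ho c)) = ev c v" using ev_arr[OF p3 V] by simp
  also have "Comp H (ev c v) (ev a u) = ev a (u @ v)" using ev_append[OF p(1) p3 cancel.prems] by simp
  finally show ?case .
next
  case (rel r q a u v b)
  from rel.hyps(2) obtain c c' where p: "wp a u c" "wp c r c'" "wp c' v b"
    by (metis wpath_append)
  from rel.hyps(3) obtain d d' where p': "wp a u d" "wp d q d'" "wp d' v b"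
    by (metis wpath_append)
  have dc: "d = c" using p p' wpath_det by metis
  have V: "c \<in> V" using wp_V' p rel by auto
  have d'c': "d' = c'" using wpath_start[OF p(3) p'(3)] .
  have q2: "wp c q c'" and q3: "wp c' v b" using p' dc d'c' by auto
  have "ev a (u @ r @ v) = Comp H (ev c (r @ v)) (ev a u)"
    by (rule ev_append[OF p(1) wpath_appendI[OF p(2) p(3)] rel.prems])
  also have "ev c (r @ v) = Comp H (ev c' v) (ev c r)" by (rule ev_append[OF p(2) p(3) V])
  also have "ev c r = ev c q" using rel_ok[OF rel.hyps(1) V p(2) q2] .
  also have "Comp H (ev c' v) (ev c q) = ev c (q @ v)" by (rule ev_append[OF q2 q3 V, symmetric])
  also have "Comp H (ev c (q @ v)) (ev a u) = ev a (u @ q @ v)"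
    by (rule ev_append[OF p(1) wpath_appendI[OF q2 q3] rel.prems, symmetric])
  finally show ?case .
qed (auto)

definition fm :: "'v \<times> 'v \<times> 'e word set \<Rightarrow> 'n" where
  "fm = (\<lambda>(a, b, W). ev a (SOME w. w \<in> W))"

lemma fm_cls: "a \<in> V \<Longrightarrow> wp a w b \<Longrightarrow> fm (a, b, cls a b w) = ev a w"
  unfolding fm_def using ev_wequiv[OF wequiv.sym[OF some_wclass]] by simp

lemma fm_functor: "gfunctor PG H ho fm"
  unfolding gfunctor_def
proof (intro conjI ballI impI)
  fix a assume "a \<in> Obj PG" then show "ho a \<in> Obj H" using ho by simp
next
  fix f assume "f \<in> Arr PG"
  then obtain a b w where f: "f = (a, b, cls a b w)" "a \<in> V" "b \<in> V" "wp a w b" by (rule PG_arrE)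
  show "fm f \<in> Arr H" "Dom H (fm f) = ho (Dom PG f)" "Cod H (fm f) = ho (Cod PG f)"
    using f fm_cls ev_arr by auto
next
  fix a assume "a \<in> Obj PG" then show "fm (Idt PG a) = Idt H (ho a)"
    using fm_cls[of a "[]" a] by simp
next
  fix f g assume "f \<in> Arr PG" "g \<in> Arr PG" "Cod PG f = Dom PG g"
  then obtain a b w c v where f: "f = (a, b, cls a b w)" "a \<in> V" "b \<in> V" "wp a w b"
    and g: "g = (b, c, cls b c v)" "c \<in> V" "wp b v c"
    by (metis PG_arrE PG_simps(2,3))
  show "fm (Comp PG g f) = Comp H (fm g) (fm f)"
    using f g PG_comp[of a w b v c] fm_cls[OF f(2) wpath_appendI[OF f(4) g(3)]] fm_cls ev_append[OF f(4) g(3) f(2)]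
    by simp
qed

lemma fm_gen: "e \<in> E \<Longrightarrow> fm (gen e) = hg e"
  unfolding gen_def using st hg by (subst fm_cls) auto

end

lemma (in presl) pres_nat_iso:
  assumes st: "\<And>e. e \<in> E \<Longrightarrow> s e \<in> V \<and> t e \<in> V"
    and H: "groupoid H"
    and F1: "gfunctor PG H f1o f1m" and F2: "gfunctor PG H f2o f2m"
    and eta: "\<And>a. a \<in> V \<Longrightarrow> eta a \<in> Arr H \<and> Dom H (eta a) = f1o a \<and> Cod H (eta a) = f2o a"
    and nat: "\<And>e. e \<in> E \<Longrightarrow> Comp H (eta (t e)) (f1m (gen e)) = Comp H (f2m (gen e)) (eta (s e))"
  shows "nat_iso PG H f1o f1m f2o f2m eta"
proof -
  interpret HL: gpdl H by (rule gpdl.intro[OF H])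
  note F1D = gfunctorD[OF F1] and F2D = gfunctorD[OF F2]
  have natw: "Comp H (eta b) (f1m (a, b, cls a b w)) = Comp H (f2m (a, b, cls a b w)) (eta a)"
    if "wp a w b" "a \<in> V" for a b w
    using that
  proof (induction w arbitrary: a)
    case Nil
    then have "a = b" by simp
    then show ?case using Nil F1D(5)[of a] F2D(5)[of a] eta[of a] by simp
  next
    case (Cons x w)
    obtain e d where x: "x = (e, d)" by (cases x)
    let ?c = "if d then t e else s e"
    have e: "e \<in> E" and a: "a = (if d then s e else t e)" and wc: "wp ?c w b"
      using Cons.prems by (auto simp: x split: if_splits)
    have V: "s e \<in> V" "t e \<in> V" "?c \<in> V" "b \<in> V" using st[OF e] wp_V[OF st wc] by auto
    have stp: "wp a [x] ?c" using e a x by auto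
    have ih: "Comp H (eta b) (f1m (?c, b, cls ?c b w)) = Comp H (f2m (?c, b, cls ?c b w)) (eta ?c)"
      using Cons.IH[OF wc V(3)] .
    have arrw: "(?c, b, cls ?c b w) \<in> Arr PG" using V wc by (intro PG_arrI) auto
    define g where "g = (if d then gen e else PGL.ginv (gen e))"
    have gen: "gen e \<in> Arr PG" using gen_arr e V by auto
    have g: "g = (a, ?c, cls a ?c [x])" unfolding g_def gen_def using PG_ginv[of "s e" "t e" "[(e, True)]"] V e a x
      by (auto simp: winv_def)
    have garr: "g \<in> Arr PG" using g V a stp by (auto intro!: PG_arrI split: if_splits)
    have natg: "Comp H (eta ?c) (f1m g) = Comp H (f2m g) (eta a)"
    proof (cases d)
      case True
      then show ?thesis using nat[OF e] a unfolding g_def by simp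
    next
      case False
      have "Comp H (eta (s e)) (HL.ginv (f1m (gen e))) = Comp H (HL.ginv (f2m (gen e))) (eta (t e))"
        using gen F1D F2D eta V nat[OF e] unfolding gen_def
        by (intro HL.nat_inv) auto
      then show ?thesis using False a gfunctor_ginv[OF groupoid_PG H F1 gen] gfunctor_ginv[OF groupoid_PG H F2 gen]
        unfolding g_def by simp
    qed
    have split: "(a, b, cls a b (x # w)) = Comp PG (?c, b, cls ?c b w) g"
      using g PG_comp[OF stp wc] by simp
    have gd: "Dom PG g = a" "Cod PG g = ?c" using g by auto
    show ?case unfolding split
      apply (subst F1D(6)[OF garr arrw], simp add: gd)
      apply (subst F2D(6)[OF garr arrw], simp add: gd)
      apply (rule HL.nat_comp[OF _ _ _ _ _ _ _ _ _ _ _ _ _ natg ih])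
      using F1D F2D garr arrw gd eta V a by (auto split: if_splits)
  qed
  have A: "\<forall>a\<in>Obj PG. eta a \<in> Arr H \<and> Dom H (eta a) = f1o a \<and> Cod H (eta a) = f2o a \<and>
        (\<exists>g\<in>Arr H. Dom H g = f2o a \<and> Cod H g = f1o a \<and>
           Comp H g (eta a) = Idt H (f1o a) \<and> Comp H (eta a) g = Idt H (f2o a))"
  proof
    fix a assume a: "a \<in> Obj PG"
    show "eta a \<in> Arr H \<and> Dom H (eta a) = f1o a \<and> Cod H (eta a) = f2o a \<and>
        (\<exists>g\<in>Arr H. Dom H g = f2o a \<and> Cod H g = f1o a \<and>
           Comp H g (eta a) = Idt H (f1o a) \<and> Comp H (eta a) g = Idt H (f2o a))"
      using eta[of a] a by (intro conjI bexI[of _ "HL.ginv (eta a)"]) auto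
  qed
  have B: "\<forall>f\<in>Arr PG. Comp H (eta (Cod PG f)) (f1m f) = Comp H (f2m f) (eta (Dom PG f))"
  proof
    fix f assume "f \<in> Arr PG"
    then obtain a b w where f: "f = (a, b, cls a b w)" "a \<in> V" "b \<in> V" "wp a w b" by (rule PG_arrE)
    show "Comp H (eta (Cod PG f)) (f1m f) = Comp H (f2m f) (eta (Dom PG f))"
      using natw[OF f(4) f(2)] f by simp
  qed
  show ?thesis unfolding nat_iso_def using A B by blast
qed



lemma wlift_Nil[simp]: "wlift h [] = []"
  and wlift_Cons[simp]: "wlift h ((e, d) # w) = (if d then h e else winv (h e)) @ wlift h w"
  by (auto simp: wlift_def)

lemma weval_lift:
  fixes V' :: "'w set" and E' :: "'f set" and s' t' :: "'f \<Rightarrow> 'w" and R' and ho :: "'v \<Rightarrow> 'w"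
    and h :: "'e \<Rightarrow> 'f word" and s t :: "'e \<Rightarrow> 'v"
  assumes h: "\<And>e. e \<in> E \<Longrightarrow> ho (s e) \<in> V' \<and> ho (t e) \<in> V' \<and> wpath E' s' t' (ho (s e)) (h e) (ho (t e))"
    and p: "wpath E s t a w b" and a: "ho a \<in> V'"
  shows "wpath E' s' t' (ho a) (wlift h w) (ho b) \<and>
    weval (pres_gpd V' E' s' t' R') s t ho
      (\<lambda>e. (ho (s e), ho (t e), wclass E' s' t' R' (ho (s e)) (ho (t e)) (h e))) a w =
    (ho a, ho b, wclass E' s' t' R' (ho a) (ho b) (wlift h w))"
  using p a
proof (induction w arbitrary: a)
  case Nil
  then show ?case by (simp add: pres_gpd_def)
next
  case (Cons x w)
  interpret T: presl V' E' s' t' R' .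
  obtain e d where x: "x = (e, d)" by (cases x)
  show ?case
  proof (cases d)
    case True
    then have *: "e \<in> E" "s e = a" "wpath E s t (t e) w b" using Cons.prems by (auto simp: x)
    note ih = Cons.IH[OF *(3)] and he = h[OF *(1)]
    have "weval T.PG s t ho (\<lambda>e. (ho (s e), ho (t e), T.cls (ho (s e)) (ho (t e)) (h e))) a (x # w) =
      Comp T.PG (ho (t e), ho b, T.cls (ho (t e)) (ho b) (wlift h w)) (ho (s e), ho (t e), T.cls (ho (s e)) (ho (t e)) (h e))"
      using ih he True x by simp
    also have "\<dots> = (ho a, ho b, T.cls (ho a) (ho b) (h e @ wlift h w))"
      using T.PG_comp[of "ho (s e)" "h e" "ho (t e)" "wlift h w" "ho b"] ih he * by simp
    finally show ?thesis using True x * ih he by (auto intro: wpath_appendI)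
  next
    case False
    then have *: "e \<in> E" "t e = a" "wpath E s t (s e) w b" using Cons.prems by (auto simp: x)
    note ih = Cons.IH[OF *(3)] and he = h[OF *(1)]
    have "weval T.PG s t ho (\<lambda>e. (ho (s e), ho (t e), T.cls (ho (s e)) (ho (t e)) (h e))) a (x # w) =
      Comp T.PG (ho (s e), ho b, T.cls (ho (s e)) (ho b) (wlift h w))
        (T.PGL.ginv (ho (s e), ho (t e), T.cls (ho (s e)) (ho (t e)) (h e)))"
      using ih he False x by simp
    also have "T.PGL.ginv (ho (s e), ho (t e), T.cls (ho (s e)) (ho (t e)) (h e)) =
       (ho (t e), ho (s e), T.cls (ho (t e)) (ho (s e)) (winv (h e)))"
      using T.PG_ginv he by auto
    also have "Comp T.PG (ho (s e), ho b, T.cls (ho (s e)) (ho b) (wlift h w))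
       (ho (t e), ho (s e), T.cls (ho (t e)) (ho (s e)) (winv (h e))) =
       (ho a, ho b, T.cls (ho a) (ho b) (winv (h e) @ wlift h w))"
      using T.PG_comp[of "ho (t e)" "winv (h e)" "ho (s e)" "wlift h w" "ho b"] ih he * wpath_winv by metis
    finally show ?thesis using False x * ih he by (auto intro: wpath_appendI wpath_winv)
  qed
qed



locale diag =
  fixes P :: "nat set set" and Phi :: "nat set \<Rightarrow> ('o, 'm) gpd"
    and Fo :: "nat set \<Rightarrow> nat set \<Rightarrow> 'o \<Rightarrow> 'o" and Fm :: "nat set \<Rightarrow> nat set \<Rightarrow> 'm \<Rightarrow> 'm"
  assumes D: "gpd_diagram P Phi Fo Fm"
begin

abbreviation "TO \<equiv> tot_obj P Phi"
abbreviation "OR \<equiv> obj_rel P Phi Fo"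
abbreviation "CV \<equiv> colim_V P Phi Fo"
abbreviation "CE \<equiv> colim_E P Phi"
abbreviation "Cs \<equiv> colim_s P Phi Fo"
abbreviation "Ct \<equiv> colim_t P Phi Fo"
abbreviation "CR \<equiv> colim_R P Phi Fm"
abbreviation "C \<equiv> colim P Phi Fo Fm"
abbreviation "TE \<equiv> groth_E P Phi Fo"
abbreviation "Ts \<equiv> groth_s"
abbreviation "Tt \<equiv> groth_t Phi"
abbreviation "TR \<equiv> groth_R P Phi Fo Fm"
abbreviation "T \<equiv> twocolim P Phi Fo Fm"
abbreviation "dobj \<equiv> delta_obj P Phi Fo"
abbreviation "darr \<equiv> delta_arr P Phi Fo Fm"

lemmas DD = D[unfolded gpd_diagram_def]

lemma grp: "X \<in> P \<Longrightarrow> groupoid (Phi X)"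
  using DD[THEN conjunct1] by blast

lemma funX: "X \<in> P \<Longrightarrow> Y \<in> P \<Longrightarrow> X \<subseteq> Y \<Longrightarrow> gfunctor (Phi X) (Phi Y) (Fo X Y) (Fm X Y)"
  using DD[THEN conjunct2, THEN conjunct1] by blast

lemma Fo_id[simp]: "X \<in> P \<Longrightarrow> a \<in> Obj (Phi X) \<Longrightarrow> Fo X X a = a"
  and Fm_id[simp]: "X \<in> P \<Longrightarrow> f \<in> Arr (Phi X) \<Longrightarrow> Fm X X f = f"
  using DD[THEN conjunct2, THEN conjunct2, THEN conjunct1] by blast+

lemma Fo_comp: "X \<in> P \<Longrightarrow> Y \<in> P \<Longrightarrow> Z \<in> P \<Longrightarrow> X \<subseteq> Y \<Longrightarrow> Y \<subseteq> Z \<Longrightarrow> a \<in> Obj (Phi X) \<Longrightarrow>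
    Fo Y Z (Fo X Y a) = Fo X Z a"
  and Fm_comp: "X \<in> P \<Longrightarrow> Y \<in> P \<Longrightarrow> Z \<in> P \<Longrightarrow> X \<subseteq> Y \<Longrightarrow> Y \<subseteq> Z \<Longrightarrow> f \<in> Arr (Phi X) \<Longrightarrow>
    Fm Y Z (Fm X Y f) = Fm X Z f"
  using DD[THEN conjunct2, THEN conjunct2, THEN conjunct2] by blast+

lemma FoO: "X \<in> P \<Longrightarrow> Y \<in> P \<Longrightarrow> X \<subseteq> Y \<Longrightarrow> a \<in> Obj (Phi X) \<Longrightarrow> Fo X Y a \<in> Obj (Phi Y)"
  by (simp add: gfunctorD(1)[OF funX])

lemma FmA: "X \<in> P \<Longrightarrow> Y \<in> P \<Longrightarrow> X \<subseteq> Y \<Longrightarrow> f \<in> Arr (Phi X) \<Longrightarrow> Fm X Y f \<in> Arr (Phi Y)"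
  and FmD: "X \<in> P \<Longrightarrow> Y \<in> P \<Longrightarrow> X \<subseteq> Y \<Longrightarrow> f \<in> Arr (Phi X) \<Longrightarrow> Dom (Phi Y) (Fm X Y f) = Fo X Y (Dom (Phi X) f)"
  and FmC: "X \<in> P \<Longrightarrow> Y \<in> P \<Longrightarrow> X \<subseteq> Y \<Longrightarrow> f \<in> Arr (Phi X) \<Longrightarrow> Cod (Phi Y) (Fm X Y f) = Fo X Y (Cod (Phi X) f)"
  and FmI: "X \<in> P \<Longrightarrow> Y \<in> P \<Longrightarrow> X \<subseteq> Y \<Longrightarrow> a \<in> Obj (Phi X) \<Longrightarrow> Fm X Y (Idt (Phi X) a) = Idt (Phi Y) (Fo X Y a)"
  and FmCo: "X \<in> P \<Longrightarrow> Y \<in> P \<Longrightarrow> X \<subseteq> Y \<Longrightarrow> f \<in> Arr (Phi X) \<Longrightarrow> g \<in> Arr (Phi X) \<Longrightarrow>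
     Cod (Phi X) f = Dom (Phi X) g \<Longrightarrow> Fm X Y (Comp (Phi X) g f) = Comp (Phi Y) (Fm X Y g) (Fm X Y f)"
  by (simp_all add: gfunctorD[OF funX])

lemma pdom[simp]: "X \<in> P \<Longrightarrow> f \<in> Arr (Phi X) \<Longrightarrow> Dom (Phi X) f \<in> Obj (Phi X)"
  and pcod[simp]: "X \<in> P \<Longrightarrow> f \<in> Arr (Phi X) \<Longrightarrow> Cod (Phi X) f \<in> Obj (Phi X)"
  and pidt[simp]: "X \<in> P \<Longrightarrow> a \<in> Obj (Phi X) \<Longrightarrow> Idt (Phi X) a \<in> Arr (Phi X)"
  and pidtD[simp]: "X \<in> P \<Longrightarrow> a \<in> Obj (Phi X) \<Longrightarrow> Dom (Phi X) (Idt (Phi X) a) = a"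
  and pidtC[simp]: "X \<in> P \<Longrightarrow> a \<in> Obj (Phi X) \<Longrightarrow> Cod (Phi X) (Idt (Phi X) a) = a"
  by (simp_all add: gpdl.dom_cod[OF gpdl.intro[OF grp]] gpdl.idt[OF gpdl.intro[OF grp]])

lemma pcomp[simp]: "X \<in> P \<Longrightarrow> f \<in> Arr (Phi X) \<Longrightarrow> g \<in> Arr (Phi X) \<Longrightarrow> Cod (Phi X) f = Dom (Phi X) g \<Longrightarrow>
    Comp (Phi X) g f \<in> Arr (Phi X)"
  and pcompD[simp]: "X \<in> P \<Longrightarrow> f \<in> Arr (Phi X) \<Longrightarrow> g \<in> Arr (Phi X) \<Longrightarrow> Cod (Phi X) f = Dom (Phi X) g \<Longrightarrow>
    Dom (Phi X) (Comp (Phi X) g f) = Dom (Phi X) f"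
  and pcompC[simp]: "X \<in> P \<Longrightarrow> f \<in> Arr (Phi X) \<Longrightarrow> g \<in> Arr (Phi X) \<Longrightarrow> Cod (Phi X) f = Dom (Phi X) g \<Longrightarrow>
    Cod (Phi X) (Comp (Phi X) g f) = Cod (Phi X) g"
  by (simp_all add: gpdl.comp_arr[OF gpdl.intro[OF grp]] gpdl.comp_dom[OF gpdl.intro[OF grp]] gpdl.comp_cod[OF gpdl.intro[OF grp]])

lemma pidl[simp]: "X \<in> P \<Longrightarrow> f \<in> Arr (Phi X) \<Longrightarrow> Cod (Phi X) f = a \<Longrightarrow> Comp (Phi X) (Idt (Phi X) a) f = f"
  and pidr[simp]: "X \<in> P \<Longrightarrow> f \<in> Arr (Phi X) \<Longrightarrow> Dom (Phi X) f = a \<Longrightarrow> Comp (Phi X) f (Idt (Phi X) a) = f"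
  by (simp_all add: gpdl.idl'[OF gpdl.intro[OF grp]] gpdl.idr'[OF gpdl.intro[OF grp]])

definition le :: "nat set \<times> 'o \<Rightarrow> nat set \<times> 'o \<Rightarrow> bool" where
  "le q q' \<longleftrightarrow> q \<in> TO \<and> q' \<in> TO \<and> fst q \<subseteq> fst q' \<and> snd q' = Fo (fst q) (fst q') (snd q)"

lemma TO_iff[simp]: "(X, x) \<in> TO \<longleftrightarrow> X \<in> P \<and> x \<in> Obj (Phi X)"
  by (simp add: tot_obj_def)

lemma le_iff: "le (X, x) (Y, y) \<longleftrightarrow> X \<in> P \<and> Y \<in> P \<and> x \<in> Obj (Phi X) \<and> X \<subseteq> Y \<and> y = Fo X Y x"
  unfolding le_def using FoO by auto

lemma le_refl: "q \<in> TO \<Longrightarrow> le q q"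
  by (cases q) (auto simp: le_iff)

lemma le_trans: "le p q \<Longrightarrow> le q r \<Longrightarrow> le p r"
  by (cases p, cases q, cases r) (auto simp: le_iff Fo_comp)

lemma le_antisym: "le p q \<Longrightarrow> le q p \<Longrightarrow> p = q"
  by (cases p, cases q) (auto simp: le_iff)

lemma le_TO: "le p q \<Longrightarrow> p \<in> TO" "le p q \<Longrightarrow> q \<in> TO"
  by (auto simp: le_def)

abbreviation "LE \<equiv> {(p, q). le p q}"

lemma OR_eq: "OR = (LE \<union> LE\<inverse>)\<^sup>*"
proof -
  have "{((X, x), (Y, Fo X Y x)) | X Y x. X \<in> P \<and> Y \<in> P \<and> X \<subseteq> Y \<and> x \<in> Obj (Phi X)} = LE"
    by (auto simp: le_def FoO)
  then show ?thesis unfolding obj_rel_def Let_def by simp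
qed

lemma OR_sym: "(p, q) \<in> OR \<Longrightarrow> (q, p) \<in> OR"
  unfolding OR_eq by (metis converse_Un converse_converse rtrancl_converseI sup_commute)

lemma OR_trans: "(p, q) \<in> OR \<Longrightarrow> (q, r) \<in> OR \<Longrightarrow> (p, r) \<in> OR"
  unfolding OR_eq by (rule rtrancl_trans)

lemma OR_le: "le p q \<Longrightarrow> (p, q) \<in> OR"
  unfolding OR_eq by auto

lemma OR_refl: "(p, p) \<in> OR"
  unfolding OR_eq by auto

lemma OR_inv: assumes "(p, q) \<in> OR" "\<And>a b. le a b \<Longrightarrow> Q a \<longleftrightarrow> Q b" "Q p" shows "Q q"
  using assms(1,3) unfolding OR_eq
proof (induction rule: rtrancl_induct)
  case (step y z)
  then have "le y z \<or> le z y" by auto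
  then show ?case using assms(2)[of y z] assms(2)[of z y] step.IH assms(3) by blast
qed

lemma OR_TO: "(p, q) \<in> OR \<Longrightarrow> p \<in> TO \<Longrightarrow> q \<in> TO"
  using OR_inv[of p q "\<lambda>a. a \<in> TO"] le_TO by blast

lemma dobj_def': "dobj p = OR `` {p}"
  by (simp add: delta_obj_def)

lemma dobj_eq: "dobj p = dobj q \<longleftrightarrow> (p, q) \<in> OR"
  unfolding dobj_def' using OR_refl OR_sym OR_trans by blast

lemma dobj_CV: "p \<in> TO \<Longrightarrow> dobj p \<in> CV"
  unfolding dobj_def' colim_V_def by (auto intro: quotientI)

lemma CV_dobj: "c \<in> CV \<Longrightarrow> \<exists>p\<in>TO. c = dobj p"
  unfolding dobj_def' colim_V_def by (auto elim: quotientE)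

lemma dobj_mem: "p \<in> dobj p"
  unfolding dobj_def' using OR_refl by auto

lemma mem_dobj: "q \<in> dobj p \<longleftrightarrow> (p, q) \<in> OR"
  unfolding dobj_def' by auto

end



context diag
begin

lemma C_def': "C = pres_gpd CV CE Cs Ct CR" by (simp add: colim_def)
lemma T_def': "T = pres_gpd TO TE Ts Tt TR" by (simp add: twocolim_def)

lemma grpC: "groupoid C" unfolding C_def' by (rule presl.groupoid_PG)
lemma grpT: "groupoid T" unfolding T_def' by (rule presl.groupoid_PG)

sublocale CG: gpdl C by (rule gpdl.intro[OF grpC])
sublocale TG: gpdl T by (rule gpdl.intro[OF grpT])

lemma CE_iff[simp]: "(X, f) \<in> CE \<longleftrightarrow> X \<in> P \<and> f \<in> Arr (Phi X)"
  by (simp add: colim_E_def)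
lemma Cs_simp[simp]: "Cs (X, f) = dobj (X, Dom (Phi X) f)"
  by (simp add: colim_s_def dobj_def')
lemma Ct_simp[simp]: "Ct (X, f) = dobj (X, Cod (Phi X) f)"
  by (simp add: colim_t_def dobj_def')
lemma TE_iff[simp]: "(X, x, Y, f) \<in> TE \<longleftrightarrow> X \<in> P \<and> Y \<in> P \<and> X \<subseteq> Y \<and> x \<in> Obj (Phi X) \<and>
    f \<in> Arr (Phi Y) \<and> Dom (Phi Y) f = Fo X Y x"
  by (simp add: groth_E_def)
lemma Ts_simp[simp]: "Ts (X, x, Y, f) = (X, x)"
  by (simp add: groth_s_def)
lemma Tt_simp[simp]: "Tt (X, x, Y, f) = (Y, Cod (Phi Y) f)"
  by (simp add: groth_t_def)

lemma C_st: "e \<in> CE \<Longrightarrow> Cs e \<in> CV \<and> Ct e \<in> CV"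
  by (cases e) (auto intro!: dobj_CV)
lemma T_st: "e \<in> TE \<Longrightarrow> Ts e \<in> TO \<and> Tt e \<in> TO"
  by (cases e) auto

abbreviation "Ccls \<equiv> wclass CE Cs Ct CR"
abbreviation "Tcls \<equiv> wclass TE Ts Tt TR"
abbreviation "Cwp \<equiv> wpath CE Cs Ct"
abbreviation "Twp \<equiv> wpath TE Ts Tt"
abbreviation "Cg \<equiv> presl.gen CE Cs Ct CR"
abbreviation "Tg \<equiv> presl.gen TE Ts Tt TR"

lemma Cg_def: "Cg e = (Cs e, Ct e, Ccls (Cs e) (Ct e) [(e, True)])"
  by (simp add: presl.gen_def)
lemma Tg_def: "Tg e = (Ts e, Tt e, Tcls (Ts e) (Tt e) [(e, True)])"
  by (simp add: presl.gen_def)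

lemma Cg_arr: "e \<in> CE \<Longrightarrow> Cg e \<in> Arr C" "Dom C (Cg e) = Cs e" "Cod C (Cg e) = Ct e"
proof -
  assume e: "e \<in> CE"
  show "Cg e \<in> Arr C" unfolding C_def' Cg_def
    by (rule presl.PG_arrI) (use C_st[OF e] e in auto)
qed (auto simp: Cg_def C_def' pres_gpd_def)
lemma Tg_arr: "e \<in> TE \<Longrightarrow> Tg e \<in> Arr T" "Dom T (Tg e) = Ts e" "Cod T (Tg e) = Tt e"
proof -
  assume e: "e \<in> TE"
  show "Tg e \<in> Arr T" unfolding T_def' Tg_def
    by (rule presl.PG_arrI) (use T_st[OF e] e in auto)
qed (auto simp: Tg_def T_def' pres_gpd_def)

lemma T_comp_gen:
  assumes e1: "e1 \<in> TE" and e2: "e2 \<in> TE" and st: "Tt e1 = Ts e2"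
  shows "Comp T (Tg e2) (Tg e1) = (Ts e1, Tt e2, Tcls (Ts e1) (Tt e2) [(e1, True), (e2, True)])"
  unfolding T_def' Tg_def using presl.PG_comp[of TE Ts Tt "Ts e1" "[(e1, True)]" "Tt e1" "[(e2, True)]" "Tt e2" TO TR]
  e1 e2 st by simp

lemma TR1:
  assumes e1: "(X, x, Y, f) \<in> TE" and e2: "(Y, Cod (Phi Y) f, Z, g) \<in> TE"
  shows "Comp T (Tg (Y, Cod (Phi Y) f, Z, g)) (Tg (X, x, Y, f)) = Tg (X, x, Z, Comp (Phi Z) g (Fm Y Z f))"
proof -
  let ?e1 = "(X, x, Y, f)" and ?e2 = "(Y, Cod (Phi Y) f, Z, g)" and ?e3 = "(X, x, Z, Comp (Phi Z) g (Fm Y Z f))"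
  have e3: "?e3 \<in> TE" and t3: "Tt ?e3 = Tt ?e2"
    using e1 e2 by (auto simp: FmA FmD FmC Fo_comp)
  have r: "([(?e1, True), (?e2, True)], [(?e3, True)]) \<in> TR"
    unfolding groth_R_def apply (rule UnI1) using e1 e2 by (intro CollectI exI conjI) (simp_all only: refl)
  have "wequiv TE Ts Tt TR (X, x) (Tt ?e2) ([] @ [(?e1, True), (?e2, True)] @ []) ([] @ [(?e3, True)] @ [])"
    by (rule wequiv.rel[OF r]) (use e1 e2 e3 t3 in auto)
  then have "Tcls (X, x) (Tt ?e2) [(?e1, True), (?e2, True)] = Tcls (X, x) (Tt ?e2) [(?e3, True)]"
    by (intro wclass_eqI) simp
  then show ?thesis using T_comp_gen[OF e1 e2] t3 by (simp add: Tg_def)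
qed

lemma TR2:
  assumes "X \<in> P" "x \<in> Obj (Phi X)"
  shows "Tg (X, x, X, Idt (Phi X) x) = Idt T (X, x)"
proof -
  let ?e = "(X, x, X, Idt (Phi X) x)"
  have e: "?e \<in> TE" using assms by simp
  have r: "([(?e, True)], []) \<in> TR"
    unfolding groth_R_def apply (rule UnI2) using assms by (intro CollectI exI conjI) (simp_all only: refl)
  have "wequiv TE Ts Tt TR (X, x) (X, x) ([] @ [(?e, True)] @ []) ([] @ [] @ [])"
    by (rule wequiv.rel[OF r]) (use e assms in auto)
  then have "Tcls (X, x) (X, x) [(?e, True)] = Tcls (X, x) (X, x) []"
    by (intro wclass_eqI) simp
  then show ?thesis using assms by (simp add: Tg_def T_def' pres_gpd_def)
qed

definition iota :: "nat set \<times> 'o \<Rightarrow> nat set \<times> 'o \<Rightarrow> _" where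
  "iota p q = Tg (fst p, snd p, fst q, Idt (Phi (fst q)) (snd q))"

definition eps :: "nat set \<Rightarrow> 'm \<Rightarrow> _" where
  "eps X f = Tg (X, Dom (Phi X) f, X, f)"

lemma iota_edge: "le p q \<Longrightarrow> (fst p, snd p, fst q, Idt (Phi (fst q)) (snd q)) \<in> TE"
  by (cases p, cases q) (auto simp: le_iff FoO)

lemma iota_arr: "le p q \<Longrightarrow> iota p q \<in> Arr T" "le p q \<Longrightarrow> Dom T (iota p q) = p" "le p q \<Longrightarrow> Cod T (iota p q) = q"
  unfolding iota_def using Tg_arr(1)[OF iota_edge] Tg_arr(2,3) by (cases p, cases q, auto simp: le_iff FoO)+

lemma eps_edge: "X \<in> P \<Longrightarrow> f \<in> Arr (Phi X) \<Longrightarrow> (X, Dom (Phi X) f, X, f) \<in> TE"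
  by simp

lemma eps_arr: "X \<in> P \<Longrightarrow> f \<in> Arr (Phi X) \<Longrightarrow> eps X f \<in> Arr T"
  "X \<in> P \<Longrightarrow> f \<in> Arr (Phi X) \<Longrightarrow> Dom T (eps X f) = (X, Dom (Phi X) f)"
  "X \<in> P \<Longrightarrow> f \<in> Arr (Phi X) \<Longrightarrow> Cod T (eps X f) = (X, Cod (Phi X) f)"
  unfolding eps_def using Tg_arr(1)[OF eps_edge] Tg_arr(2,3) by auto

lemma iota_comp: assumes "le p q" "le q r" shows "Comp T (iota q r) (iota p q) = iota p r"
proof -
  obtain X x Y y Z z where pqr: "p = (X, x)" "q = (Y, y)" "r = (Z, z)" by (cases p, cases q, cases r)
  have h: "X \<in> P" "Y \<in> P" "Z \<in> P" "X \<subseteq> Y" "Y \<subseteq> Z" "x \<in> Obj (Phi X)" "y = Fo X Y x" "z = Fo Y Z y"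
    using assms pqr by (auto simp: le_iff)
  have "Comp T (iota q r) (iota p q) = Tg (X, x, Z, Comp (Phi Z) (Idt (Phi Z) z) (Fm Y Z (Idt (Phi Y) y)))"
    unfolding iota_def pqr using TR1[of X x Y "Idt (Phi Y) y" Z "Idt (Phi Z) z"] h by (simp add: FoO)
  also have "Comp (Phi Z) (Idt (Phi Z) z) (Fm Y Z (Idt (Phi Y) y)) = Idt (Phi Z) z"
    using h by (simp add: FmI FoO)
  finally show ?thesis unfolding iota_def pqr using h by simp
qed

lemma iota_refl: "q \<in> TO \<Longrightarrow> iota q q = Idt T q"
  by (cases q) (simp add: iota_def TR2)

lemma eps_comp: assumes "X \<in> P" "f \<in> Arr (Phi X)" "g \<in> Arr (Phi X)" "Cod (Phi X) f = Dom (Phi X) g"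
  shows "Comp T (eps X g) (eps X f) = eps X (Comp (Phi X) g f)"
  unfolding eps_def using TR1[of X "Dom (Phi X) f" X f X g] assms by simp

lemma eps_idt: "X \<in> P \<Longrightarrow> x \<in> Obj (Phi X) \<Longrightarrow> eps X (Idt (Phi X) x) = Idt T (X, x)"
  unfolding eps_def by (simp add: TR2)

lemma gen_decomp: assumes e: "(X, x, Y, f) \<in> TE"
  shows "Tg (X, x, Y, f) = Comp T (eps Y f) (iota (X, x) (Y, Fo X Y x))"
proof -
  have h: "X \<in> P" "Y \<in> P" "X \<subseteq> Y" "x \<in> Obj (Phi X)" "f \<in> Arr (Phi Y)" "Dom (Phi Y) f = Fo X Y x"
    using e by auto
  show ?thesis
    unfolding iota_def eps_def using TR1[of X x Y "Idt (Phi Y) (Fo X Y x)" Y f] h by (simp add: FoO)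
qed

lemma eps_iota: assumes "X \<in> P" "Y \<in> P" "X \<subseteq> Y" "f \<in> Arr (Phi X)"
  shows "Comp T (eps Y (Fm X Y f)) (iota (X, Dom (Phi X) f) (Y, Fo X Y (Dom (Phi X) f))) =
         Comp T (iota (X, Cod (Phi X) f) (Y, Fo X Y (Cod (Phi X) f))) (eps X f)"
proof -
  have "Comp T (eps Y (Fm X Y f)) (iota (X, Dom (Phi X) f) (Y, Fo X Y (Dom (Phi X) f))) =
      Tg (X, Dom (Phi X) f, Y, Fm X Y f)"
    using gen_decomp[of X "Dom (Phi X) f" Y "Fm X Y f"] assms by (simp add: FmA FmD)
  moreover have "Comp T (iota (X, Cod (Phi X) f) (Y, Fo X Y (Cod (Phi X) f))) (eps X f) =
      Tg (X, Dom (Phi X) f, Y, Fm X Y f)"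
    unfolding iota_def eps_def using TR1[of X "Dom (Phi X) f" X f Y "Idt (Phi Y) (Fo X Y (Cod (Phi X) f))"] assms
    by (simp add: FoO FmA FmC)
  ultimately show ?thesis by simp
qed

end



context diag
begin

definition hdl :: "nat set \<times> 'o \<times> nat set \<times> 'm \<Rightarrow> (nat set \<times> 'm) word" where
  "hdl = (\<lambda>(X, x, Y, f). [((Y, f), True)])"

definition hgd :: "nat set \<times> 'o \<times> nat set \<times> 'm \<Rightarrow> _" where
  "hgd e = (dobj (Ts e), dobj (Tt e), Ccls (dobj (Ts e)) (dobj (Tt e)) (hdl e))"

lemma hd_path: assumes e: "e \<in> TE"
  shows "dobj (Ts e) \<in> CV \<and> dobj (Tt e) \<in> CV \<and> Cwp (dobj (Ts e)) (hdl e) (dobj (Tt e))"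
proof -
  obtain X x Y f where ee: "e = (X, x, Y, f)" by (cases e)
  have h: "X \<in> P" "Y \<in> P" "X \<subseteq> Y" "x \<in> Obj (Phi X)" "f \<in> Arr (Phi Y)" "Dom (Phi Y) f = Fo X Y x"
    using e ee by auto
  have "le (X, x) (Y, Fo X Y x)" using h by (simp add: le_iff)
  then have "dobj (Y, Dom (Phi Y) f) = dobj (X, x)" using h dobj_eq OR_le OR_sym by metis
  then show ?thesis using h ee T_st[OF e] by (auto simp: hdl_def intro!: dobj_CV)
qed

lemma dlift: "Twp a w b \<Longrightarrow> a \<in> TO \<Longrightarrow> Cwp (dobj a) (wlift hdl w) (dobj b) \<and>
    weval C Ts Tt dobj hgd a w = (dobj a, dobj b, Ccls (dobj a) (dobj b) (wlift hdl w))"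
  unfolding C_def' hgd_def
  by (rule weval_lift[where E=TE]) (use hd_path dobj_CV in auto)

lemma C_rel: "(r, q) \<in> CR \<Longrightarrow> Cwp a (u @ r @ v) b \<Longrightarrow> Cwp a (u @ q @ v) b \<Longrightarrow>
   Ccls a b (u @ r @ v) = Ccls a b (u @ q @ v)"
  by (intro wclass_eqI wequiv.rel)

lemma CR1: "X \<in> P \<Longrightarrow> f \<in> Arr (Phi X) \<Longrightarrow> g \<in> Arr (Phi X) \<Longrightarrow> Cod (Phi X) f = Dom (Phi X) g \<Longrightarrow>
   ([((X, f), True), ((X, g), True)], [((X, Comp (Phi X) g f), True)]) \<in> CR"
  unfolding colim_R_def apply (rule UnI1, rule UnI1) by (intro CollectI exI conjI) (simp_all only: refl)

lemma CR2: "X \<in> P \<Longrightarrow> x \<in> Obj (Phi X) \<Longrightarrow> ([((X, Idt (Phi X) x), True)], []) \<in> CR"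
  unfolding colim_R_def apply (rule UnI1, rule UnI2) by (intro CollectI exI conjI) (simp_all only: refl)

lemma CR3: "X \<in> P \<Longrightarrow> Y \<in> P \<Longrightarrow> X \<subseteq> Y \<Longrightarrow> f \<in> Arr (Phi X) \<Longrightarrow>
   ([((X, f), True)], [((Y, Fm X Y f), True)]) \<in> CR"
  unfolding colim_R_def apply (rule UnI2) by (intro CollectI exI conjI) (simp_all only: refl)

lemma dobj_Fo: "X \<in> P \<Longrightarrow> Y \<in> P \<Longrightarrow> X \<subseteq> Y \<Longrightarrow> x \<in> Obj (Phi X) \<Longrightarrow> dobj (Y, Fo X Y x) = dobj (X, x)"
  using dobj_eq OR_le OR_sym by (metis le_iff)

lemma TR_cases:
  assumes "(r, q) \<in> TR"
  obtains X x Y f Z g where "(X, x, Y, f) \<in> TE" "(Y, Cod (Phi Y) f, Z, g) \<in> TE"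
     "r = [((X, x, Y, f), True), ((Y, Cod (Phi Y) f, Z, g), True)]"
     "q = [((X, x, Z, Comp (Phi Z) g (Fm Y Z f)), True)]"
   | X x where "X \<in> P" "x \<in> Obj (Phi X)" "r = [((X, x, X, Idt (Phi X) x), True)]" "q = []"
  using assms unfolding groth_R_def by blast

lemma rel_ok: assumes rq: "(r, q) \<in> TR" and a: "a \<in> TO" and pr: "Twp a r b" and pq: "Twp a q b"
  shows "weval C Ts Tt dobj hgd a r = weval C Ts Tt dobj hgd a q"
proof -
  have lr: "Cwp (dobj a) (wlift hdl r) (dobj b)" and er: "weval C Ts Tt dobj hgd a r = (dobj a, dobj b, Ccls (dobj a) (dobj b) (wlift hdl r))"
    using dlift[OF pr a] by auto
  have lq: "Cwp (dobj a) (wlift hdl q) (dobj b)" and eq: "weval C Ts Tt dobj hgd a q = (dobj a, dobj b, Ccls (dobj a) (dobj b) (wlift hdl q))"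
    using dlift[OF pq a] by auto
  have "Ccls (dobj a) (dobj b) (wlift hdl r) = Ccls (dobj a) (dobj b) (wlift hdl q)"
    using rq
  proof (cases rule: TR_cases)
    case (1 X x Y f Z g)
    have h: "X \<in> P" "Y \<in> P" "Z \<in> P" "X \<subseteq> Y" "Y \<subseteq> Z" "x \<in> Obj (Phi X)" "f \<in> Arr (Phi Y)" "g \<in> Arr (Phi Z)"
      "Dom (Phi Y) f = Fo X Y x" "Dom (Phi Z) g = Fo Y Z (Cod (Phi Y) f)"
      using 1 by auto
    have wr: "wlift hdl r = [] @ [((Y, f), True)] @ [((Z, g), True)]" using 1 by (simp add: hdl_def)
    have wq: "wlift hdl q = [((Z, Comp (Phi Z) g (Fm Y Z f)), True)]" using 1 by (simp add: hdl_def)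
    have d1: "dobj (Z, Fo Y Z (Fo X Y x)) = dobj (X, x)"
      using h by (simp add: Fo_comp dobj_Fo FoO)
    have mid: "Cwp (dobj a) ([] @ [((Z, Fm Y Z f), True)] @ [((Z, g), True)]) (dobj b)"
      using lr wr h d1 by (simp add: FmA FmD FmC dobj_Fo)
    have "Ccls (dobj a) (dobj b) ([] @ [((Y, f), True)] @ [((Z, g), True)]) =
          Ccls (dobj a) (dobj b) ([] @ [((Z, Fm Y Z f), True)] @ [((Z, g), True)])"
      by (rule C_rel[OF CR3[of Y Z f]]) (use h lr wr mid in auto)
    also have "\<dots> = Ccls (dobj a) (dobj b) ([] @ [((Z, Comp (Phi Z) g (Fm Y Z f)), True)] @ [])"
      using C_rel[OF CR1[of Z "Fm Y Z f" g], of "dobj a" "[]" "[]" "dobj b"] h mid lq wq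
      by (simp add: FmA FmC)
    finally show ?thesis using wr wq by simp
  next
    case (2 X x)
    have "Ccls (dobj a) (dobj b) ([] @ [((X, Idt (Phi X) x), True)] @ []) = Ccls (dobj a) (dobj b) ([] @ [] @ [])"
      by (rule C_rel[OF CR2]) (use 2 lr lq in \<open>auto simp: hdl_def\<close>)
    then show ?thesis using 2 by (simp add: hdl_def)
  qed
  then show ?thesis using er eq by simp
qed

sublocale DL: presev TO TE Ts Tt TR C dobj hgd
proof
  show "groupoid C" by (rule grpC)
  show "\<And>e. e \<in> TE \<Longrightarrow> Ts e \<in> TO \<and> Tt e \<in> TO" by (rule T_st)
  show "\<And>a. a \<in> TO \<Longrightarrow> dobj a \<in> Obj C" using dobj_CV by (simp add: C_def' pres_gpd_def)
  show "\<And>e. e \<in> TE \<Longrightarrow> hgd e \<in> Arr C \<and> Dom C (hgd e) = dobj (Ts e) \<and> Cod C (hgd e) = dobj (Tt e)"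
  proof -
    fix e assume e: "e \<in> TE"
    have hp: "dobj (Ts e) \<in> CV" "dobj (Tt e) \<in> CV" "Cwp (dobj (Ts e)) (hdl e) (dobj (Tt e))"
      using hd_path[OF e] by auto
    show "hgd e \<in> Arr C \<and> Dom C (hgd e) = dobj (Ts e) \<and> Cod C (hgd e) = dobj (Tt e)"
      unfolding hgd_def C_def' using presl.PG_arrI[OF hp] by (simp add: pres_gpd_def)
  qed
  show "\<And>r q a b. (r, q) \<in> TR \<Longrightarrow> a \<in> TO \<Longrightarrow> Twp a r b \<Longrightarrow> Twp a q b \<Longrightarrow>
         weval C Ts Tt dobj hgd a r = weval C Ts Tt dobj hgd a q"
    by (rule rel_ok)
qed

lemma darr_eq: assumes "f \<in> Arr T" shows "darr f = DL.fm f"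
proof -
  obtain a b w where f: "f = (a, b, Tcls a b w)" "a \<in> TO" "b \<in> TO" "Twp a w b"
    using assms unfolding T_def' by (rule presl.PG_arrE)
  let ?w = "SOME w'. w' \<in> Tcls a b w"
  have eqv: "wequiv TE Ts Tt TR a b w ?w" by (rule some_wclass[OF f(4)])
  have p': "Twp a ?w b" by (rule conjunct2[OF wequiv_wpath[OF eqv]])
  have "darr f = (dobj a, dobj b, Ccls (dobj a) (dobj b) (wlift hdl ?w))"
    unfolding f delta_arr_def pres_fun_arr_def hdl_def by simp
  also have "\<dots> = weval C Ts Tt dobj hgd a ?w" using dlift[OF p' f(2)] by simp
  also have "\<dots> = weval C Ts Tt dobj hgd a w" using DL.ev_wequiv[OF eqv f(2)] by simp
  also have "\<dots> = DL.fm f" using DL.fm_cls[OF f(2) f(4)] f(1) by simp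
  finally show ?thesis .
qed

lemma delta_functor: "gfunctor T C dobj darr"
  by (rule gfunctor_cong[OF grpT _ darr_eq[symmetric]]) (use DL.fm_functor in \<open>simp add: T_def'\<close>)

lemma darr_gen: "e \<in> TE \<Longrightarrow> darr (Tg e) = hgd e"
  using darr_eq[OF Tg_arr(1)] DL.fm_gen by (simp add: T_def')

lemma darr_iota: assumes "le p q" shows "darr (iota p q) = Idt C (dobj p)"
proof -
  obtain X x Y y where pq: "p = (X, x)" "q = (Y, y)" by (cases p, cases q)
  have h: "X \<in> P" "Y \<in> P" "X \<subseteq> Y" "x \<in> Obj (Phi X)" "y = Fo X Y x" using assms pq by (auto simp: le_iff)
  have yo: "y \<in> Obj (Phi Y)" using h FoO by auto
  have dq: "dobj q = dobj p" using pq h dobj_Fo by simp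
  have "darr (iota p q) = hgd (X, x, Y, Idt (Phi Y) y)"
    unfolding iota_def pq using darr_gen iota_edge[OF assms] pq by simp
  also have "\<dots> = (dobj p, dobj p, Ccls (dobj p) (dobj p) ([] @ [((Y, Idt (Phi Y) y), True)] @ []))"
    using dq pq yo h by (simp add: hgd_def hdl_def)
  also have "Ccls (dobj p) (dobj p) ([] @ [((Y, Idt (Phi Y) y), True)] @ []) = Ccls (dobj p) (dobj p) ([] @ [] @ [])"
    by (rule C_rel[OF CR2]) (use h yo dq pq in \<open>auto simp: dobj_Fo\<close>)
  finally show ?thesis by (simp add: C_def' pres_gpd_def)
qed

lemma darr_eps: assumes "X \<in> P" "f \<in> Arr (Phi X)" shows "darr (eps X f) = Cg (X, f)"
  unfolding eps_def using darr_gen[of "(X, Dom (Phi X) f, X, f)"] assms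
  by (simp add: hgd_def hdl_def Cg_def)

end



lemma (in gpdl) indep_alg:
  assumes ar: "i \<in> Arr G" "j \<in> Arr G" "k' \<in> Arr G"
    and d: "Cod G i = Dom G j" "Dom G k' = Dom G j"
  shows "Comp G (Comp G k' i) (ginv (Comp G j i)) = Comp G k' (ginv j)"
proof (rule cancel_r[of _ _ "Comp G j i"])
  have "Comp G (Comp G k' (ginv j)) (Comp G j i) = Comp G (Comp G (Comp G k' (ginv j)) j) i"
    using ar d by (intro assoc) auto
  also have "\<dots> = Comp G k' i" using ar d by (simp add: comp_ginv_eq)
  also have "\<dots> = Comp G (Comp G (Comp G k' i) (ginv (Comp G j i))) (Comp G j i)"
    using ar d by (simp add: comp_ginv_eq)
  finally show "Comp G (Comp G (Comp G k' i) (ginv (Comp G j i))) (Comp G j i) =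
      Comp G (Comp G k' (ginv j)) (Comp G j i)" by simp
qed (use ar d in auto)

lemma obj_rel_induct_gen:
  assumes "(p, q) \<in> obj_rel P' Phi Fo" "Q p"
    and "\<And>X Y x. X \<in> P' \<Longrightarrow> Y \<in> P' \<Longrightarrow> X \<subseteq> Y \<Longrightarrow> x \<in> Obj (Phi X) \<Longrightarrow> Q (X, x) \<longleftrightarrow> Q (Y, Fo X Y x)"
  shows "Q q"
  using assms(1,2) unfolding obj_rel_def Let_def
proof (induction rule: rtrancl_induct)
  case (step y z)
  from step.hyps(2) obtain X Y x where h: "X \<in> P'" "Y \<in> P'" "X \<subseteq> Y" "x \<in> Obj (Phi X)"
    "(y = (X, x) \<and> z = (Y, Fo X Y x)) \<or> (z = (X, x) \<and> y = (Y, Fo X Y x))"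
    by auto
  then show ?case using assms(3)[OF h(1-4)] step.IH step.prems by auto
qed

lemma L1: "1 \<le> m \<Longrightarrow> {Suc m..n} \<subseteq> X \<Longrightarrow> {Suc (m - 1)..n} \<subseteq> insert m (X::nat set)"
proof
  fix i assume "1 \<le> m" "{Suc m..n} \<subseteq> X" "i \<in> {Suc (m - 1)..n}"
  then show "i \<in> insert m X" by (cases "i = m") auto
qed

lemma L2: "m \<le> (n::nat) \<Longrightarrow> 1 \<le> m \<Longrightarrow> X \<subset> {1..n} - {m} \<Longrightarrow> insert m X \<subset> {1..n}"
proof -
  assume a: "m \<le> n" "1 \<le> m" "X \<subset> {1..n} - {m}"
  then have m: "m \<in> {1..n}" by simp
  from a(3) obtain j where j: "j \<in> {1..n} - {m}" "j \<notin> X" by blast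
  show ?thesis unfolding psubset_eq
  proof
    show "insert m X \<subseteq> {1..n}" using m a(3) by blast
    show "insert m X \<noteq> {1..n}" using j by blast
  qed
qed

lemma L3: "m \<in> X \<Longrightarrow> 1 \<le> m \<Longrightarrow> {Suc m..n} \<subseteq> X \<Longrightarrow> {Suc (m - 1)..n} \<subseteq> (X::nat set)"
  using L1[of m n X] by (simp add: insert_absorb)

lemma L4: "m \<notin> X \<Longrightarrow> X \<subset> {1..n} \<Longrightarrow> X \<subseteq> {1..n} - {m::nat}"
  by blast

lemma L5: "X \<subset> {1..n} - {m} \<Longrightarrow> X \<subset> {1..(n::nat)} \<and> m \<notin> X \<and> X \<noteq> {1..n} - {m}"
  by blast

lemma L6: "{Suc 0..n} \<subseteq> X \<Longrightarrow> X \<subset> {1..(n::nat)} \<Longrightarrow> False"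
  by (simp add: less_le_not_le)

lemma L7: "{Suc m..n} \<subseteq> {1..n} - {m::nat}"
  by (intro subsetI) simp

lemma L8: "1 \<le> m \<Longrightarrow> m \<le> n \<Longrightarrow> {1..n} - {m} \<subset> {1..n::nat}"
  by (rule psubsetI) (simp_all add: set_eq_iff, use atLeastAtMost_iff in blast)


locale cube = diag P Phi Fo Fm
  for P :: "nat set set" and Phi :: "nat set \<Rightarrow> ('o, 'm) gpd"
    and Fo :: "nat set \<Rightarrow> nat set \<Rightarrow> 'o \<Rightarrow> 'o" and Fm :: "nat set \<Rightarrow> nat set \<Rightarrow> 'm \<Rightarrow> 'm" +
  fixes n :: nat
  assumes Pdef: "P = Bposet {1..n} {}"
begin

definition Pm :: "nat \<Rightarrow> nat set set" where
  "Pm m = {X. {Suc m..n} \<subseteq> X \<and> X \<subset> {1..n}}"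
definition Vm :: "nat \<Rightarrow> nat set" where
  "Vm m = {1..n} - {m}"
definition Mm :: "nat \<Rightarrow> nat set set" where
  "Mm m = Bposet (Vm m) {Suc m..n}"
definition phi :: "nat \<Rightarrow> nat set \<times> 'o \<Rightarrow> nat set \<times> 'o" where
  "phi m p = (insert m (fst p), Fo (fst p) (insert m (fst p)) (snd p))"

definition Triv :: "nat \<Rightarrow> (nat set \<times> 'o \<Rightarrow> _) \<Rightarrow> bool" where
  "Triv m k \<longleftrightarrow> (\<forall>p\<in>TO. fst p \<in> Pm m \<longrightarrow> k p \<in> Arr T \<and> Dom T (k p) = p \<and> darr (k p) = Idt C (dobj p)) \<and>
     (\<forall>q q'. le q q' \<longrightarrow> fst q \<in> Pm m \<longrightarrow> fst q' \<in> Pm m \<longrightarrow> Comp T (k q') (iota q q') = k q)"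

definition Conn :: "nat \<Rightarrow> bool" where
  "Conn m \<longleftrightarrow> (\<forall>d1 d2. d1 \<in> TO \<longrightarrow> d2 \<in> TO \<longrightarrow> fst d1 \<in> Mm m \<longrightarrow> fst d2 \<in> Mm m \<longrightarrow>
      Fo (fst d1) (Vm m) (snd d1) = Fo (fst d2) (Vm m) (snd d2) \<longrightarrow> (d1, d2) \<in> obj_rel (Mm m) Phi Fo)"

lemma P_iff: "X \<in> P \<longleftrightarrow> X \<subset> {1..n}"
  by (simp add: Pdef Bposet_def)

lemma Pm_P: "X \<in> Pm m \<Longrightarrow> X \<in> P"
  by (simp add: Pm_def P_iff)

lemma Mm_P: "X \<in> Mm m \<Longrightarrow> X \<in> P"
  by (auto simp: Mm_def Bposet_def Vm_def P_iff)

lemma Mm_props: "X \<in> Mm m \<Longrightarrow> X \<in> Pm m \<and> m \<notin> X \<and> X \<noteq> Vm m"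
  unfolding Mm_def Bposet_def Vm_def Pm_def using L5 by blast

lemma Mm_ins: "1 \<le> m \<Longrightarrow> m \<le> n \<Longrightarrow> X \<in> Mm m \<Longrightarrow> insert m X \<in> Pm (m - 1)"
  unfolding Mm_def Bposet_def Vm_def Pm_def using L1 L2 by blast

lemma Vm_Pm: "1 \<le> m \<Longrightarrow> m \<le> n \<Longrightarrow> Vm m \<in> Pm m" "m \<notin> Vm m"
  unfolding Vm_def Pm_def using L7 L8 by blast+

lemma Vm_P: "1 \<le> m \<Longrightarrow> m \<le> n \<Longrightarrow> Vm m \<in> P"
  using Vm_Pm Pm_P by blast

lemma Pm_cases: assumes "1 \<le> m" "m \<le> n" "X \<in> Pm m"
  shows "(m \<in> X \<and> X \<in> Pm (m - 1)) \<or> (m \<notin> X \<and> X \<in> Mm m) \<or> X = Vm m"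
proof (cases "m \<in> X")
  case True
  then show ?thesis using L3[OF True assms(1)] assms(3) by (simp add: Pm_def)
next
  case False
  then have "X \<subseteq> Vm m" using assms L4 by (simp add: Pm_def Vm_def)
  then have "X \<subset> Vm m \<or> X = Vm m" by blast
  then show ?thesis using False assms(3) by (auto simp: Pm_def Mm_def Bposet_def)
qed

lemma Pm0: "Pm 0 = {}"
  unfolding Pm_def using L6 by blast

lemma Pmn: "Pm n = P"
  using P_iff unfolding Pm_def by auto

end



context cube
begin

lemma le_m: "le q q' \<Longrightarrow> m \<in> fst q \<Longrightarrow> m \<in> fst q'"
  by (cases q, cases q') (auto simp: le_iff)

lemma Mm_sub: "X \<in> Mm m \<Longrightarrow> X \<subseteq> Vm m"
  by (auto simp: Mm_def Bposet_def)

lemma phi_le: assumes m: "1 \<le> m" "m \<le> n" and X: "X \<in> Mm m" and x: "x \<in> Obj (Phi X)"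
  shows "le (X, x) (phi m (X, x))" "fst (phi m (X, x)) \<in> Pm (m - 1)"
proof -
  have i: "insert m X \<in> Pm (m - 1)" using Mm_ins[OF m X] .
  then show "fst (phi m (X, x)) \<in> Pm (m - 1)" by (simp add: phi_def)
  show "le (X, x) (phi m (X, x))" using i Pm_P Mm_P[OF X] x by (auto simp: phi_def le_iff)
qed

lemma phi_up: assumes X: "X \<in> Mm m" and l: "le (X, x) q'" and mq: "m \<in> fst q'"
  shows "le (phi m (X, x)) q'"
proof -
  obtain Y y where q: "q' = (Y, y)" by (cases q')
  have h: "X \<in> P" "Y \<in> P" "x \<in> Obj (Phi X)" "X \<subseteq> Y" "y = Fo X Y x" using l q by (auto simp: le_iff)
  have iY: "insert m X \<subseteq> Y" using h mq q by auto
  have iP: "insert m X \<in> P" using iY h(2) by (auto simp: P_iff)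
  have fo: "Fo X (insert m X) x \<in> Obj (Phi (insert m X))" by (rule FoO) (use h iP in auto)
  have fc: "Fo (insert m X) Y (Fo X (insert m X) x) = Fo X Y x" by (rule Fo_comp) (use h iP iY in auto)
  show ?thesis using h iY iP q fo fc by (simp add: phi_def le_iff)
qed

lemma phi_mono: assumes X: "X \<in> Mm m" and Y: "Y \<in> Mm m" and l: "le (X, x) (Y, y)"
  and m: "1 \<le> m" "m \<le> n"
  shows "le (phi m (X, x)) (phi m (Y, y))"
proof -
  have h: "X \<in> P" "Y \<in> P" "x \<in> Obj (Phi X)" "X \<subseteq> Y" "y = Fo X Y x" using l by (auto simp: le_iff)
  have iX: "insert m X \<in> P" and iY: "insert m Y \<in> P" using Mm_ins[OF m X] Mm_ins[OF m Y] Pm_P by auto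
  have "Fo (insert m X) (insert m Y) (Fo X (insert m X) x) = Fo X (insert m Y) x"
    using h iX iY by (intro Fo_comp) auto
  moreover have "Fo Y (insert m Y) (Fo X Y x) = Fo X (insert m Y) x"
    using h iX iY by (intro Fo_comp) auto
  moreover have fo: "Fo X (insert m X) x \<in> Obj (Phi (insert m X))" by (rule FoO) (use h iX in auto)
  ultimately show ?thesis using h iX iY by (auto simp: phi_def le_iff)
qed

lemma le_top_eq: assumes m: "1 \<le> m" "m \<le> n" and l: "le q q'" and t: "fst q = Vm m" and q': "fst q' \<in> Pm m"
  shows "q' = q"
proof -
  obtain X x Y y where qq: "q = (X, x)" "q' = (Y, y)" by (cases q, cases q')
  have h: "X \<in> P" "Y \<in> P" "x \<in> Obj (Phi X)" "X \<subseteq> Y" "y = Fo X Y x" using l qq by (auto simp: le_iff)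
  have mY: "m \<notin> Y"
  proof
    assume "m \<in> Y"
    then have "{1..n} \<subseteq> Y" using h(4) t qq by (auto simp: Vm_def)
    then show False using q' qq by (auto simp: Pm_def)
  qed
  have "Y \<subseteq> {1..n}" using q' qq by (auto simp: Pm_def)
  then have "Y = X" using mY h(4) t qq by (auto simp: Vm_def)
  then show ?thesis using h qq by simp
qed

end



context cube
begin

lemma dobj_le: "le p q \<Longrightarrow> dobj q = dobj p"
  using dobj_eq OR_le OR_sym by metis

lemma darr_comp: "f \<in> Arr T \<Longrightarrow> g \<in> Arr T \<Longrightarrow> Cod T f = Dom T g \<Longrightarrow> darr (Comp T g f) = Comp C (darr g) (darr f)"
  using gfunctorD(6)[OF delta_functor] by blast

lemma darr_ginv: "f \<in> Arr T \<Longrightarrow> darr (TG.ginv f) = CG.ginv (darr f)"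
  using gfunctor_ginv[OF grpT grpC delta_functor] by blast

lemma darr_idt: "p \<in> TO \<Longrightarrow> darr (Idt T p) = Idt C (dobj p)"
  using gfunctorD(5)[OF delta_functor] by (simp add: T_def' pres_gpd_def)

lemma dobj_C: "p \<in> TO \<Longrightarrow> dobj p \<in> Obj C"
  using dobj_CV by (simp add: C_def' pres_gpd_def)

context
  fixes m :: nat and k' :: "nat set \<times> 'o \<Rightarrow> (nat set \<times> 'o) \<times> (nat set \<times> 'o) \<times> (nat set \<times> 'o \<times> nat set \<times> 'm) word set"
  assumes m1: "1 \<le> m" and mn: "m \<le> n" and IH: "Triv (m - 1) k'" and Cn: "Conn m"
begin

lemma IH1: "p \<in> TO \<Longrightarrow> fst p \<in> Pm (m - 1) \<Longrightarrow> k' p \<in> Arr T \<and> Dom T (k' p) = p \<and> darr (k' p) = Idt C (dobj p)"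
  using IH unfolding Triv_def by blast

lemma IH2: "le q q' \<Longrightarrow> fst q \<in> Pm (m - 1) \<Longrightarrow> fst q' \<in> Pm (m - 1) \<Longrightarrow> Comp T (k' q') (iota q q') = k' q"
  using IH unfolding Triv_def by blast

definition kM :: "nat set \<times> 'o \<Rightarrow> _" where
  "kM d = Comp T (k' (phi m d)) (iota d (phi m d))"

definition inM :: "nat set \<times> 'o \<Rightarrow> bool" where
  "inM d \<longleftrightarrow> d \<in> TO \<and> fst d \<in> Mm m"

lemma inM_phi: assumes "inM d" shows "le d (phi m d)" "fst (phi m d) \<in> Pm (m - 1)" "phi m d \<in> TO"
proof -
  obtain X x where d: "d = (X, x)" by (cases d)
  have X: "X \<in> Mm m" "x \<in> Obj (Phi X)" using assms d by (auto simp: inM_def)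
  show "le d (phi m d)" "fst (phi m d) \<in> Pm (m - 1)" using phi_le[OF m1 mn X] d by auto
  then show "phi m d \<in> TO" using le_TO by blast
qed

lemma kM_arr: assumes "inM d"
  shows "kM d \<in> Arr T" "Dom T (kM d) = d" "darr (kM d) = Idt C (dobj d)"
proof -
  note ph = inM_phi[OF assms]
  have d: "d \<in> TO" using assms by (simp add: inM_def)
  note k = IH1[OF ph(3) ph(2)]
  have i: "iota d (phi m d) \<in> Arr T" "Dom T (iota d (phi m d)) = d" "Cod T (iota d (phi m d)) = phi m d"
    using iota_arr[OF ph(1)] by auto
  show "kM d \<in> Arr T" "Dom T (kM d) = d" unfolding kM_def using k i by auto
  have "darr (kM d) = Comp C (darr (k' (phi m d))) (darr (iota d (phi m d)))"
    unfolding kM_def using k i by (intro darr_comp) auto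
  also have "\<dots> = Comp C (Idt C (dobj d)) (Idt C (dobj d))"
    using k darr_iota[OF ph(1)] dobj_le[OF ph(1)] by simp
  also have "\<dots> = Idt C (dobj d)" using dobj_C[OF d] by simp
  finally show "darr (kM d) = Idt C (dobj d)" .
qed

lemma kM_up: assumes d: "inM d" and l: "le d q'" and mq: "m \<in> fst q'" and q': "fst q' \<in> Pm m"
  shows "Comp T (k' q') (iota d q') = kM d"
proof -
  obtain X x where dd: "d = (X, x)" by (cases d)
  have X: "X \<in> Mm m" using d dd by (simp add: inM_def)
  note ph = inM_phi[OF d]
  have l2: "le (phi m d) q'" using phi_up[OF X] l mq dd by simp
  have q'm: "fst q' \<in> Pm (m - 1)" using Pm_cases[OF m1 mn q'] mq Vm_Pm(2)[of m] Mm_props[of "fst q'" m] by metis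
  have q'T: "q' \<in> TO" using le_TO l by blast
  have "Comp T (k' q') (iota d q') = Comp T (k' q') (Comp T (iota (phi m d) q') (iota d (phi m d)))"
    using iota_comp[OF ph(1) l2] by simp
  also have "\<dots> = Comp T (Comp T (k' q') (iota (phi m d) q')) (iota d (phi m d))"
    using iota_arr[OF ph(1)] iota_arr[OF l2] IH1[OF q'T q'm] by (intro TG.assoc) auto
  also have "\<dots> = kM d" unfolding kM_def using IH2[OF l2 ph(2) q'm] by simp
  finally show ?thesis .
qed

lemma kM_compat: assumes d: "inM d" and d': "inM d'" and l: "le d d'"
  shows "Comp T (kM d') (iota d d') = kM d"
proof -
  obtain X x Y y where dd: "d = (X, x)" "d' = (Y, y)" by (cases d, cases d')
  have X: "X \<in> Mm m" "Y \<in> Mm m" using d d' dd by (auto simp: inM_def)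
  note ph = inM_phi[OF d] and ph' = inM_phi[OF d']
  have lp: "le (phi m d) (phi m d')" using phi_mono[OF X _ m1 mn] l dd by simp
  have "Comp T (kM d') (iota d d') = Comp T (k' (phi m d')) (Comp T (iota d' (phi m d')) (iota d d'))"
    unfolding kM_def using iota_arr[OF ph'(1)] iota_arr[OF l] IH1[OF ph'(3) ph'(2)]
    by (intro TG.assoc[symmetric]) auto
  also have "Comp T (iota d' (phi m d')) (iota d d') = iota d (phi m d')"
    by (rule iota_comp[OF l ph'(1)])
  also have "iota d (phi m d') = Comp T (iota (phi m d) (phi m d')) (iota d (phi m d))"
    by (rule iota_comp[OF ph(1) lp, symmetric])
  also have "Comp T (k' (phi m d')) (Comp T (iota (phi m d) (phi m d')) (iota d (phi m d))) =
      Comp T (Comp T (k' (phi m d')) (iota (phi m d) (phi m d'))) (iota d (phi m d))"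
    using iota_arr[OF ph(1)] iota_arr[OF lp] IH1[OF ph'(3) ph'(2)] by (intro TG.assoc) auto
  also have "\<dots> = kM d" unfolding kM_def using IH2[OF lp ph(2) ph'(2)] by simp
  finally show ?thesis .
qed

definition below :: "nat set \<times> 'o \<Rightarrow> nat set \<times> 'o \<Rightarrow> bool" where
  "below t d \<longleftrightarrow> inM d \<and> le d t"

lemma below_move:
  assumes t: "fst t = Vm m" "t \<in> TO" and X: "X \<in> Mm m" "Y \<in> Mm m" "X \<subseteq> Y" "x \<in> Obj (Phi X)"
  shows "below t (X, x) \<longleftrightarrow> below t (Y, Fo X Y x)"
proof -
  obtain V y where tt: "t = (V, y)" by (cases t)
  have V: "V = Vm m" "V \<in> P" "y \<in> Obj (Phi V)" using t tt by auto
  have XP: "X \<in> P" "Y \<in> P" using X Mm_P by auto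
  have XV: "X \<subseteq> V" "Y \<subseteq> V" using X Mm_sub V by auto
  have fo: "Fo X Y x \<in> Obj (Phi Y)" using FoO XP X by auto
  have fc: "Fo Y V (Fo X Y x) = Fo X V x" using Fo_comp XP V XV X by auto
  show ?thesis unfolding below_def inM_def using X XP XV fo fc tt V by (auto simp: le_iff)
qed

lemma indep: assumes t: "fst t = Vm m" "t \<in> TO" and b1: "below t d1" and b2: "below t d2"
  shows "Comp T (kM d2) (TG.ginv (iota d2 t)) = Comp T (kM d1) (TG.ginv (iota d1 t))"
proof -
  have l1: "le d1 t" and l2: "le d2 t" and i1: "inM d1" and i2: "inM d2" using b1 b2 by (auto simp: below_def)
  have "Fo (fst d1) (Vm m) (snd d1) = snd t" "Fo (fst d2) (Vm m) (snd d2) = snd t"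
    using l1 l2 t by (cases d1, cases d2, cases t, auto simp: le_iff)+
  then have rel: "(d1, d2) \<in> obj_rel (Mm m) Phi Fo"
    using Cn[unfolded Conn_def, rule_format, of d1 d2] i1 i2 unfolding inM_def by simp
  let ?Q = "\<lambda>d. below t d \<and> Comp T (kM d) (TG.ginv (iota d t)) = Comp T (kM d1) (TG.ginv (iota d1 t))"
  have "?Q d2"
  proof (rule obj_rel_induct_gen[OF rel, of ?Q])
    show "?Q d1" using b1 by simp
  next
    fix X Y x assume h: "X \<in> Mm m" "Y \<in> Mm m" "X \<subseteq> Y" "x \<in> Obj (Phi X)"
    let ?e = "(X, x)" and ?e' = "(Y, Fo X Y x)"
    have bb: "below t ?e \<longleftrightarrow> below t ?e'" by (rule below_move[OF t h])
    have key: "below t ?e \<Longrightarrow> Comp T (kM ?e) (TG.ginv (iota ?e t)) = Comp T (kM ?e') (TG.ginv (iota ?e' t))"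
    proof -
      assume be: "below t ?e"
      then have be': "below t ?e'" using bb by simp
      have le1: "le ?e ?e'" using h Mm_P by (simp add: le_iff)
      have ie: "inM ?e" "inM ?e'" "le ?e t" "le ?e' t" using be be' by (auto simp: below_def)
      have c1: "kM ?e = Comp T (kM ?e') (iota ?e ?e')" using kM_compat[OF ie(1,2) le1] by simp
      have c2: "iota ?e t = Comp T (iota ?e' t) (iota ?e ?e')" using iota_comp[OF le1 ie(4)] by simp
      show ?thesis unfolding c1 c2
        using iota_arr[OF le1] iota_arr[OF ie(4)] kM_arr[OF ie(2)]
        by (intro TG.indep_alg) auto
    qed
    show "?Q ?e \<longleftrightarrow> ?Q ?e'" using bb key by metis
  qed
  then show ?thesis by simp
qed

definition ktop :: "nat set \<times> 'o \<Rightarrow> _" where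
  "ktop t = (if \<exists>d. below t d then Comp T (kM (SOME d. below t d)) (TG.ginv (iota (SOME d. below t d) t))
             else Idt T t)"

lemma ktop_arr: assumes t: "fst t = Vm m" "t \<in> TO"
  shows "ktop t \<in> Arr T" "Dom T (ktop t) = t" "darr (ktop t) = Idt C (dobj t)"
proof -
  have "ktop t \<in> Arr T \<and> Dom T (ktop t) = t \<and> darr (ktop t) = Idt C (dobj t)"
  proof (cases "\<exists>d. below t d")
    case True
    define d where "d = (SOME d. below t d)"
    have b: "below t d" unfolding d_def using True by (rule someI_ex)
    have kt: "ktop t = Comp T (kM d) (TG.ginv (iota d t))" unfolding ktop_def d_def using True by simp
    have l: "le d t" and i: "inM d" using b by (auto simp: below_def)
    note ka = kM_arr[OF i] and ia = iota_arr[OF l]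
    have dT: "d \<in> TO" using i by (simp add: inM_def)
    have "darr (ktop t) = Comp C (darr (kM d)) (darr (TG.ginv (iota d t)))"
      unfolding kt using ka ia by (intro darr_comp) auto
    also have "\<dots> = Comp C (Idt C (dobj d)) (CG.ginv (Idt C (dobj d)))"
      using ka darr_ginv[OF ia(1)] darr_iota[OF l] by simp
    also have "\<dots> = Idt C (dobj t)" using dobj_C[OF dT] dobj_le[OF l] by simp
    finally show ?thesis unfolding kt using ka ia by auto
  next
    case False
    have tO: "t \<in> Obj T" using t by (simp add: T_def' pres_gpd_def)
    show ?thesis unfolding ktop_def using False darr_idt[OF t(2)] TG.idt[OF tO] by simp
  qed
  then show "ktop t \<in> Arr T" "Dom T (ktop t) = t" "darr (ktop t) = Idt C (dobj t)" by auto
qed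

lemma ktop_compat: assumes t: "fst t = Vm m" "t \<in> TO" and b: "below t d"
  shows "Comp T (ktop t) (iota d t) = kM d"
proof -
  have ex: "\<exists>d. below t d" using b by blast
  have bs: "below t (SOME d. below t d)" using ex by (rule someI_ex)
  have kt: "ktop t = Comp T (kM d) (TG.ginv (iota d t))"
    unfolding ktop_def using ex indep[OF t b bs] by simp
  have l: "le d t" and i: "inM d" using b by (auto simp: below_def)
  show ?thesis unfolding kt using kM_arr[OF i] iota_arr[OF l] by (simp add: TG.comp_ginv_eq)
qed

definition kk :: "nat set \<times> 'o \<Rightarrow> _" where
  "kk p = (if m \<in> fst p then k' p else if fst p = Vm m then ktop p else kM p)"

lemma kk_arr: assumes p: "p \<in> TO" "fst p \<in> Pm m"
  shows "kk p \<in> Arr T \<and> Dom T (kk p) = p \<and> darr (kk p) = Idt C (dobj p)"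
  using Pm_cases[OF m1 mn p(2)]
proof (elim disjE conjE)
  assume "m \<in> fst p" "fst p \<in> Pm (m - 1)"
  then show ?thesis using IH1[OF p(1)] by (simp add: kk_def)
next
  assume h: "m \<notin> fst p" "fst p \<in> Mm m"
  then have "fst p \<noteq> Vm m" "inM p" using Mm_props p by (auto simp: inM_def)
  then show ?thesis using kM_arr h by (simp add: kk_def)
next
  assume h: "fst p = Vm m"
  then show ?thesis using ktop_arr[OF h p(1)] Vm_Pm(2) by (simp add: kk_def)
qed

lemma kk_compat: assumes l: "le q q'" and q: "fst q \<in> Pm m" and q': "fst q' \<in> Pm m"
  shows "Comp T (kk q') (iota q q') = kk q"
proof -
  have qT: "q \<in> TO" "q' \<in> TO" using le_TO l by auto
  show ?thesis
  using Pm_cases[OF m1 mn q]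
  proof (elim disjE conjE)
    assume h: "m \<in> fst q" "fst q \<in> Pm (m - 1)"
    have h': "m \<in> fst q'" using le_m[OF l h(1)] .
    then have "fst q' \<in> Pm (m - 1)" using Pm_cases[OF m1 mn q'] Vm_Pm(2)[of m] Mm_props[of "fst q'" m] by metis
    then show ?thesis using IH2[OF l h(2)] h h' by (simp add: kk_def)
  next
    assume h: "m \<notin> fst q" "fst q \<in> Mm m"
    have iq: "inM q" "fst q \<noteq> Vm m" using h qT Mm_props by (auto simp: inM_def)
    have kq: "kk q = kM q" using h iq by (simp add: kk_def)
    show ?thesis
      using Pm_cases[OF m1 mn q']
    proof (elim disjE conjE)
      assume h': "m \<in> fst q'" "fst q' \<in> Pm (m - 1)"
      then show ?thesis using kM_up[OF iq(1) l h'(1) q'] kq by (simp add: kk_def)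
    next
      assume h': "m \<notin> fst q'" "fst q' \<in> Mm m"
      have iq': "inM q'" "fst q' \<noteq> Vm m" using h' qT Mm_props by (auto simp: inM_def)
      then show ?thesis using kM_compat[OF iq(1) iq'(1) l] kq h' by (simp add: kk_def)
    next
      assume h': "fst q' = Vm m"
      have "below q' q" using iq l by (simp add: below_def)
      then show ?thesis using ktop_compat[OF h' qT(2)] kq h' Vm_Pm(2) by (simp add: kk_def)
    qed
  next
    assume h: "fst q = Vm m"
    have "q' = q" by (rule le_top_eq[OF m1 mn l h q'])
    then show ?thesis using iota_refl[OF qT(1)] kk_arr[OF qT(1) q] by simp
  qed
qed

lemma step_triv: "Triv m kk"
  unfolding Triv_def using kk_arr kk_compat by blast

end

end



context cube
begin

lemma triv_upto: assumes C: "\<And>m. 1 \<le> m \<Longrightarrow> m \<le> n \<Longrightarrow> Conn m"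
  shows "m \<le> n \<Longrightarrow> \<exists>k. Triv m k"
proof (induction m)
  case 0
  show ?case by (auto simp: Triv_def Pm0)
next
  case (Suc m)
  then obtain k' where "Triv m k'" by auto
  then have "Triv (Suc m - 1) k'" by simp
  moreover have "Conn (Suc m)" using C[of "Suc m"] Suc.prems by simp
  ultimately have "Triv (Suc m) (kk (Suc m) k')" using step_triv[of "Suc m" k'] Suc.prems by simp
  then show ?case by blast
qed

lemma Mm1: "Mm 1 = {}"
proof -
  have "Vm 1 = {Suc 1..n}" by (auto simp: Vm_def)
  then show ?thesis unfolding Mm_def Bposet_def by auto
qed

lemma Conn1: "Conn 1"
  unfolding Conn_def using Mm1 by (metis empty_iff)

lemma obj_rel_Fo: assumes rel: "(d, p) \<in> obj_rel (Mm m) Phi Fo" and mm: "1 \<le> m" "m \<le> n"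
  and d: "fst d \<in> Mm m"
  shows "Fo (fst p) (Vm m) (snd p) = Fo (fst d) (Vm m) (snd d) \<and> fst p \<in> Mm m"
proof (rule obj_rel_induct_gen[OF rel, where Q = "\<lambda>q. Fo (fst q) (Vm m) (snd q) = Fo (fst d) (Vm m) (snd d) \<and> fst q \<in> Mm m"])
  show "Fo (fst d) (Vm m) (snd d) = Fo (fst d) (Vm m) (snd d) \<and> fst d \<in> Mm m" using d by simp
next
  fix X Y x assume h: "X \<in> Mm m" "Y \<in> Mm m" "X \<subseteq> Y" "x \<in> Obj (Phi X)"
  have "Fo Y (Vm m) (Fo X Y x) = Fo X (Vm m) x"
    using h Mm_P Vm_P[OF mm] Mm_sub by (intro Fo_comp) auto
  then show "(Fo (fst (X, x)) (Vm m) (snd (X, x)) = Fo (fst d) (Vm m) (snd d) \<and> fst (X, x) \<in> Mm m) =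
         (Fo (fst (Y, Fo X Y x)) (Vm m) (snd (Y, Fo X Y x)) = Fo (fst d) (Vm m) (snd d) \<and> fst (Y, Fo X Y x) \<in> Mm m)"
    using h by simp
qed

lemma Conn_condA: assumes mm: "1 \<le> m" "m \<le> n" and A: "condA Phi Fo Fm (Vm m) {Suc m..n}"
  shows "Conn m"
  unfolding Conn_def
proof (intro allI impI)
  fix d1 d2 assume d: "d1 \<in> TO" "d2 \<in> TO" "fst d1 \<in> Mm m" "fst d2 \<in> Mm m"
    and eq: "Fo (fst d1) (Vm m) (snd d1) = Fo (fst d2) (Vm m) (snd d2)"
  let ?R = "obj_rel (Mm m) Phi Fo"
  let ?c1 = "?R `` {d1}" and ?c2 = "?R `` {d2}"
  have tot: "d1 \<in> tot_obj (Mm m) Phi" "d2 \<in> tot_obj (Mm m) Phi"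
    using d by (cases d1, cases d2, auto simp: tot_obj_def)
  have cV: "?c1 \<in> Obj (colim (Mm m) Phi Fo Fm)" "?c2 \<in> Obj (colim (Mm m) Phi Fo Fm)"
    using tot by (auto simp: colim_def pres_gpd_def colim_V_def intro: quotientI)
  have refl: "(d, d) \<in> ?R" for d by (simp add: obj_rel_def Let_def)
  have canon: "canon_obj Fo (Vm m) (?R `` {d}) = Fo (fst d) (Vm m) (snd d)" if "fst d \<in> Mm m" for d
  proof -
    have ex: "\<exists>p. p \<in> ?R `` {d}" using refl by blast
    have "(SOME p. p \<in> ?R `` {d}) \<in> ?R `` {d}" using ex by (rule someI_ex)
    then have "(d, SOME p. p \<in> ?R `` {d}) \<in> ?R" by simp
    from obj_rel_Fo[OF this mm that] show ?thesis
      unfolding canon_obj_def by (simp add: case_prod_beta)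
  qed
  have "canon_obj Fo (Vm m) ?c1 = canon_obj Fo (Vm m) ?c2" using canon d eq by simp
  then have "?c1 = ?c2" using A cV unfolding condA_def Mm_def by (meson inj_onD)
  then show "(d1, d2) \<in> ?R" using refl[of d2] by blast
qed

end



context gpdl
begin

lemma conj_arr: assumes "kp \<in> Arr G" "kq \<in> Arr G" "g \<in> Arr G" "Dom G kp = Dom G g" "Cod G g = Dom G kq"
  shows "Comp G kq (Comp G g (ginv kp)) \<in> Arr G" "Dom G (Comp G kq (Comp G g (ginv kp))) = Cod G kp"
    "Cod G (Comp G kq (Comp G g (ginv kp))) = Cod G kq"
  using assms by auto

lemma conj_comp: assumes a: "kp \<in> Arr G" "kq \<in> Arr G" "kr \<in> Arr G" "g \<in> Arr G" "h \<in> Arr G"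
  and d: "Dom G kp = Dom G g" "Cod G g = Dom G kq" "Dom G h = Dom G kq" "Cod G h = Dom G kr"
  shows "Comp G (Comp G kr (Comp G h (ginv kq))) (Comp G kq (Comp G g (ginv kp))) =
         Comp G kr (Comp G (Comp G h g) (ginv kp))"
proof -
  have "Comp G (Comp G kr (Comp G h (ginv kq))) (Comp G kq (Comp G g (ginv kp))) =
        Comp G kr (Comp G (Comp G h (ginv kq)) (Comp G kq (Comp G g (ginv kp))))"
    using a d by (intro assoc[symmetric]) auto
  also have "Comp G (Comp G h (ginv kq)) (Comp G kq (Comp G g (ginv kp))) =
        Comp G (Comp G (Comp G h (ginv kq)) kq) (Comp G g (ginv kp))"
    using a d by (intro assoc) auto
  also have "Comp G (Comp G h (ginv kq)) kq = h" using a d by (simp add: comp_ginv_eq)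
  also have "Comp G h (Comp G g (ginv kp)) = Comp G (Comp G h g) (ginv kp)"
    using a d by (intro assoc) auto
  finally show ?thesis .
qed

lemma conj_k: assumes a: "kp \<in> Arr G" "kq \<in> Arr G" "g \<in> Arr G" and d: "Dom G kp = Dom G g" "Cod G g = Dom G kq"
  shows "Comp G (Comp G kq (Comp G g (ginv kp))) kp = Comp G kq g"
proof -
  have "Comp G (Comp G kq (Comp G g (ginv kp))) kp = Comp G kq (Comp G (Comp G g (ginv kp)) kp)"
    using a d by (intro assoc[symmetric]) auto
  also have "Comp G (Comp G g (ginv kp)) kp = g" using a d by (simp add: comp_ginv_eq)
  finally show ?thesis .
qed

lemma conj_id: assumes a: "kp \<in> Arr G" "kq \<in> Arr G" "g \<in> Arr G" and d: "Dom G kp = Dom G g" "Cod G g = Dom G kq"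
  and e: "Comp G kq g = kp"
  shows "Comp G kq (Comp G g (ginv kp)) = Idt G (Cod G kp)"
proof -
  have "Comp G kq (Comp G g (ginv kp)) = Comp G (Comp G kq g) (ginv kp)"
    using a d by (intro assoc) auto
  then show ?thesis using e a by simp
qed

end

context cube
begin

context
  fixes k :: "nat set \<times> 'o \<Rightarrow> (nat set \<times> 'o) \<times> (nat set \<times> 'o) \<times> (nat set \<times> 'o \<times> nat set \<times> 'm) word set"
  assumes TK: "Triv n k"
begin

lemma kP: "p \<in> TO \<Longrightarrow> k p \<in> Arr T \<and> Dom T (k p) = p \<and> darr (k p) = Idt C (dobj p)"
  using TK Pmn unfolding Triv_def by (cases p) auto

lemma kC: "le q q' \<Longrightarrow> Comp T (k q') (iota q q') = k q"
proof -
  assume l: "le q q'"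
  have "fst q \<in> P" "fst q' \<in> P" using le_TO[OF l] by (cases q, cases q', auto)+
  then show ?thesis using TK[unfolded Triv_def, THEN conjunct2, rule_format, OF l] Pmn by simp
qed

lemma kcod_le: assumes "le q q'" shows "Cod T (k q) = Cod T (k q')"
proof -
  have "Cod T (k q) = Cod T (Comp T (k q') (iota q q'))" using kC[OF assms] by simp
  also have "\<dots> = Cod T (k q')" using kP le_TO[OF assms] iota_arr[OF assms] by auto
  finally show ?thesis .
qed

lemma kcod_OR: "(p, q) \<in> OR \<Longrightarrow> Cod T (k q) = Cod T (k p)"
  using OR_inv[of p q "\<lambda>x. Cod T (k x) = Cod T (k p)"] kcod_le by metis

definition go :: "(nat set \<times> 'o) set \<Rightarrow> nat set \<times> 'o" where
  "go c = Cod T (k (SOME p. p \<in> c))"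

lemma go_dobj: "go (dobj p) = Cod T (k p)"
proof -
  have "(SOME q. q \<in> dobj p) \<in> dobj p" using dobj_mem by (rule someI)
  then show ?thesis unfolding go_def using kcod_OR mem_dobj by metis
qed

lemma kcod_TO: "p \<in> TO \<Longrightarrow> Cod T (k p) \<in> TO"
proof -
  assume p: "p \<in> TO"
  have "Cod T (k p) \<in> Obj T" using kP[OF p] by simp
  then show ?thesis by (simp add: T_def' pres_gpd_def)
qed

lemma dobj_kcod: assumes p: "p \<in> TO" shows "dobj (Cod T (k p)) = dobj p"
proof -
  have "dobj (Cod T (k p)) = Cod C (darr (k p))" using gfunctorD(4)[OF delta_functor, of "k p"] kP[OF p] by simp
  also have "darr (k p) = Idt C (dobj p)" using kP[OF p] by simp
  also have "Cod C (Idt C (dobj p)) = dobj p" using dobj_C[OF p] by simp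
  finally show ?thesis .
qed

definition hgG :: "nat set \<times> 'm \<Rightarrow> _" where
  "hgG e = (case e of (X, f) \<Rightarrow> Comp T (k (X, Cod (Phi X) f)) (Comp T (eps X f) (TG.ginv (k (X, Dom (Phi X) f)))))"

lemma hgG_props: assumes "X \<in> P" "f \<in> Arr (Phi X)"
  shows "hgG (X, f) \<in> Arr T" "Dom T (hgG (X, f)) = Cod T (k (X, Dom (Phi X) f))"
    "Cod T (hgG (X, f)) = Cod T (k (X, Cod (Phi X) f))"
proof -
  have a: "k (X, Dom (Phi X) f) \<in> Arr T" "Dom T (k (X, Dom (Phi X) f)) = (X, Dom (Phi X) f)"
    "k (X, Cod (Phi X) f) \<in> Arr T" "Dom T (k (X, Cod (Phi X) f)) = (X, Cod (Phi X) f)"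
    using kP[of "(X, Dom (Phi X) f)"] kP[of "(X, Cod (Phi X) f)"] assms by auto
  note e = eps_arr[OF assms]
  show "hgG (X, f) \<in> Arr T" "Dom T (hgG (X, f)) = Cod T (k (X, Dom (Phi X) f))"
    "Cod T (hgG (X, f)) = Cod T (k (X, Cod (Phi X) f))"
    unfolding hgG_def using TG.conj_arr[OF a(1) a(3) e(1)] a e by simp_all
qed

lemma CR_cases:
  assumes "(r, q) \<in> CR"
  obtains X f g where "X \<in> P" "f \<in> Arr (Phi X)" "g \<in> Arr (Phi X)" "Cod (Phi X) f = Dom (Phi X) g"
     "r = [((X, f), True), ((X, g), True)]" "q = [((X, Comp (Phi X) g f), True)]"
   | X x where "X \<in> P" "x \<in> Obj (Phi X)" "r = [((X, Idt (Phi X) x), True)]" "q = []"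
   | X Y f where "X \<in> P" "Y \<in> P" "X \<subseteq> Y" "f \<in> Arr (Phi X)" "r = [((X, f), True)]" "q = [((Y, Fm X Y f), True)]"
  using assms unfolding colim_R_def
  apply (elim UnE CollectE exE conjE)
  subgoal for X f g by (rule that(1)[of X f g]) simp_all
  subgoal for X x by (rule that(2)[of X x]) simp_all
  subgoal for X Y f by (rule that(3)[of X Y f]) simp_all
  done

lemma go_CV: "c \<in> CV \<Longrightarrow> go c \<in> TO"
  using CV_dobj go_dobj kcod_TO by metis

lemma kcod_iota: "le p q \<Longrightarrow> Cod T (k q) = Cod T (k p)"
  using kcod_le by metis

lemma ev0: "weval T Cs Ct go hgG a [] = Idt T (go a)"
  by simp

lemma ev1: assumes "X \<in> P" "f \<in> Arr (Phi X)"
  shows "weval T Cs Ct go hgG a [((X, f), True)] = hgG (X, f)"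
proof -
  have "Cod T (hgG (X, f)) = go (Ct (X, f))" using hgG_props[OF assms] go_dobj by simp
  then show ?thesis using hgG_props[OF assms] by simp
qed

lemma ev2: assumes "X \<in> P" "f \<in> Arr (Phi X)" "g \<in> Arr (Phi X)"
  shows "weval T Cs Ct go hgG a [((X, f), True), ((X, g), True)] = Comp T (hgG (X, g)) (hgG (X, f))"
  using ev1[OF assms(1,3)] by simp

lemma hgG_comp: assumes X: "X \<in> P" "f \<in> Arr (Phi X)" "g \<in> Arr (Phi X)" "Cod (Phi X) f = Dom (Phi X) g"
  shows "Comp T (hgG (X, g)) (hgG (X, f)) = hgG (X, Comp (Phi X) g f)"
proof -
  let ?a = "(X, Dom (Phi X) f)" and ?b = "(X, Cod (Phi X) f)" and ?c = "(X, Cod (Phi X) g)"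
  have ka: "k ?a \<in> Arr T" "Dom T (k ?a) = ?a" and kb: "k ?b \<in> Arr T" "Dom T (k ?b) = ?b"
    and kc: "k ?c \<in> Arr T" "Dom T (k ?c) = ?c" using kP X by auto
  note ef = eps_arr[OF X(1,2)] and eg = eps_arr[OF X(1,3)]
  have "Comp T (hgG (X, g)) (hgG (X, f)) =
     Comp T (k ?c) (Comp T (Comp T (eps X g) (eps X f)) (TG.ginv (k ?a)))"
    unfolding hgG_def using TG.conj_comp[OF ka(1) kb(1) kc(1) ef(1) eg(1)] ka kb kc ef eg X(4) by simp
  also have "Comp T (eps X g) (eps X f) = eps X (Comp (Phi X) g f)" using eps_comp[OF X] .
  finally show ?thesis unfolding hgG_def using X by simp
qed

lemma hgG_idt: assumes "X \<in> P" "x \<in> Obj (Phi X)"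
  shows "hgG (X, Idt (Phi X) x) = Idt T (Cod T (k (X, x)))"
proof -
  have kx: "k (X, x) \<in> Arr T" "Dom T (k (X, x)) = (X, x)" using kP assms by auto
  have "hgG (X, Idt (Phi X) x) = Comp T (k (X, x)) (Comp T (Idt T (X, x)) (TG.ginv (k (X, x))))"
    unfolding hgG_def using eps_idt assms by simp
  also have "\<dots> = Idt T (Cod T (k (X, x)))" using kx by simp
  finally show ?thesis .
qed

lemma hgG_Fm: assumes X: "X \<in> P" "Y \<in> P" "X \<subseteq> Y" "f \<in> Arr (Phi X)"
  shows "hgG (X, f) = hgG (Y, Fm X Y f)"
proof -
  let ?d = "(X, Dom (Phi X) f)" and ?c = "(X, Cod (Phi X) f)"
  let ?d' = "(Y, Fo X Y (Dom (Phi X) f))" and ?c' = "(Y, Fo X Y (Cod (Phi X) f))"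
  have ld: "le ?d ?d'" and lc: "le ?c ?c'" using X by (auto simp: le_iff)
  have kd: "k ?d \<in> Arr T" "Dom T (k ?d) = ?d" and kc: "k ?c \<in> Arr T" "Dom T (k ?c) = ?c"
    and kd': "k ?d' \<in> Arr T" "Dom T (k ?d') = ?d'" and kc': "k ?c' \<in> Arr T" "Dom T (k ?c') = ?c'"
    using kP X le_TO[OF ld] le_TO[OF lc] by auto
  note ia = iota_arr[OF ld] and ib = iota_arr[OF lc]
  note e = eps_arr[OF X(1,4)]
  have fm: "Fm X Y f \<in> Arr (Phi Y)" "Dom (Phi Y) (Fm X Y f) = Fo X Y (Dom (Phi X) f)"
    "Cod (Phi Y) (Fm X Y f) = Fo X Y (Cod (Phi X) f)" using X by (auto simp: FmA FmD FmC)
  note e' = eps_arr[OF X(2) fm(1)]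
  let ?cj = "\<lambda>kp g kq. Comp T kq (Comp T g (TG.ginv kp))"
  have id1: "?cj (k ?c) (iota ?c ?c') (k ?c') = Idt T (Cod T (k ?c))"
    using TG.conj_id[OF kc(1) kc'(1) ib(1)] kc kc' ib kC[OF lc] by simp
  have id2: "?cj (k ?d) (iota ?d ?d') (k ?d') = Idt T (Cod T (k ?d))"
    using TG.conj_id[OF kd(1) kd'(1) ia(1)] kd kd' ia kC[OF ld] by simp
  have cod: "Cod T (k ?d') = Cod T (k ?d)" "Cod T (k ?c') = Cod T (k ?c)"
    using kcod_iota[OF ld] kcod_iota[OF lc] by auto
  have "hgG (X, f) = ?cj (k ?d) (eps X f) (k ?c)" by (simp add: hgG_def)
  also have "\<dots> = Comp T (?cj (k ?c) (iota ?c ?c') (k ?c')) (?cj (k ?d) (eps X f) (k ?c))"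
    unfolding id1 using TG.conj_arr[OF kd(1) kc(1) e(1)] kd kc e by simp
  also have "\<dots> = ?cj (k ?d) (Comp T (iota ?c ?c') (eps X f)) (k ?c')"
    using TG.conj_comp[OF kd(1) kc(1) kc'(1) e(1) ib(1)] kd kc kc' e ib by simp
  also have "Comp T (iota ?c ?c') (eps X f) = Comp T (eps Y (Fm X Y f)) (iota ?d ?d')"
    using eps_iota[OF X] by simp
  also have "?cj (k ?d) (Comp T (eps Y (Fm X Y f)) (iota ?d ?d')) (k ?c') =
      Comp T (?cj (k ?d') (eps Y (Fm X Y f)) (k ?c')) (?cj (k ?d) (iota ?d ?d') (k ?d'))"
    using TG.conj_comp[OF kd(1) kd'(1) kc'(1) ia(1) e'(1), symmetric] kd kd' kc' ia e' fm by simp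
  also have "\<dots> = ?cj (k ?d') (eps Y (Fm X Y f)) (k ?c')"
    unfolding id2 using TG.conj_arr[OF kd'(1) kc'(1) e'(1)] kd' kc' e' fm cod by simp
  also have "\<dots> = hgG (Y, Fm X Y f)" using fm by (simp add: hgG_def)
  finally show ?thesis .
qed

lemma rel_okG: assumes rq: "(r, q) \<in> CR" and a: "a \<in> CV" and pr: "Cwp a r b" and pq: "Cwp a q b"
  shows "weval T Cs Ct go hgG a r = weval T Cs Ct go hgG a q"
  using rq
proof (cases rule: CR_cases)
  case (1 X f g)
  have "weval T Cs Ct go hgG a r = Comp T (hgG (X, g)) (hgG (X, f))"
    unfolding 1(5) by (rule ev2[OF 1(1-3)])
  also have "\<dots> = hgG (X, Comp (Phi X) g f)" by (rule hgG_comp[OF 1(1-4)])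
  also have "\<dots> = weval T Cs Ct go hgG a q"
    unfolding 1(6) by (rule ev1[OF 1(1) pcomp[OF 1(1-4)], symmetric])
  finally show ?thesis .
next
  case (2 X x)
  have "Cs (X, Idt (Phi X) x) = a" using pr unfolding 2(3) by (simp only: wpath.simps)
  then have aa: "a = dobj (X, x)" using 2(1,2) by simp
  have "weval T Cs Ct go hgG a r = hgG (X, Idt (Phi X) x)"
    unfolding 2(3) by (rule ev1[OF 2(1) pidt[OF 2(1,2)]])
  also have "\<dots> = Idt T (Cod T (k (X, x)))" by (rule hgG_idt[OF 2(1,2)])
  also have "\<dots> = weval T Cs Ct go hgG a q" unfolding 2(4) aa by (simp add: go_dobj)
  finally show ?thesis .
next
  case (3 X Y f)
  have "weval T Cs Ct go hgG a r = hgG (X, f)"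
    unfolding 3(5) by (rule ev1[OF 3(1,4)])
  also have "\<dots> = hgG (Y, Fm X Y f)" by (rule hgG_Fm[OF 3(1-4)])
  also have "\<dots> = weval T Cs Ct go hgG a q"
    unfolding 3(6) by (rule ev1[OF 3(2) FmA[OF 3(1-4)], symmetric])
  finally show ?thesis .
qed

lemma G_presev: "presev CV CE Cs Ct CR T go hgG"
proof
  show "groupoid T" by (rule grpT)
  show "\<And>e. e \<in> CE \<Longrightarrow> Cs e \<in> CV \<and> Ct e \<in> CV" by (rule C_st)
  show "\<And>a. a \<in> CV \<Longrightarrow> go a \<in> Obj T" using go_CV by (simp add: T_def' pres_gpd_def)
  show "\<And>e. e \<in> CE \<Longrightarrow> hgG e \<in> Arr T \<and> Dom T (hgG e) = go (Cs e) \<and> Cod T (hgG e) = go (Ct e)"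
  proof -
    fix e assume e: "e \<in> CE"
    obtain X f where ee: "e = (X, f)" by (cases e)
    have h: "X \<in> P" "f \<in> Arr (Phi X)" using e ee by auto
    show "hgG e \<in> Arr T \<and> Dom T (hgG e) = go (Cs e) \<and> Cod T (hgG e) = go (Ct e)"
      using hgG_props[OF h] ee by (simp add: go_dobj)
  qed
  show "\<And>r q a b. (r, q) \<in> CR \<Longrightarrow> a \<in> CV \<Longrightarrow> Cwp a r b \<Longrightarrow> Cwp a q b \<Longrightarrow>
         weval T Cs Ct go hgG a r = weval T Cs Ct go hgG a q"
    by (rule rel_okG)
qed

definition gm where "gm = presev.fm Cs Ct T go hgG"

lemma G_functor: "gfunctor C T go gm"
  using presev.fm_functor[OF G_presev] unfolding gm_def C_def' .

lemma gm_gen: "e \<in> CE \<Longrightarrow> gm (Cg e) = hgG e"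
  using presev.fm_gen[OF G_presev] unfolding gm_def by blast

lemma dobj_go: "c \<in> CV \<Longrightarrow> dobj (go c) = c"
  using CV_dobj go_dobj dobj_kcod by metis

lemma eta_T: "nat_iso T T id id (go \<circ> dobj) (gm \<circ> darr) k"
proof -
  have "nat_iso (pres_gpd TO TE Ts Tt TR) T id id (go \<circ> dobj) (gm \<circ> darr) k"
  proof (rule presl.pres_nat_iso)
    show "\<And>e. e \<in> TE \<Longrightarrow> Ts e \<in> TO \<and> Tt e \<in> TO" by (rule T_st)
    show "groupoid T" by (rule grpT)
    show "gfunctor (pres_gpd TO TE Ts Tt TR) T id id" using gfunctor_id[OF grpT] by (simp add: T_def')
    show "gfunctor (pres_gpd TO TE Ts Tt TR) T (go \<circ> dobj) (gm \<circ> darr)"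
      using gfunctor_comp[OF delta_functor G_functor] by (simp add: T_def')
    show "\<And>a. a \<in> TO \<Longrightarrow> k a \<in> Arr T \<and> Dom T (k a) = id a \<and> Cod T (k a) = (go \<circ> dobj) a"
      using kP go_dobj by simp
  next
    fix e assume e: "e \<in> TE"
    obtain X x Y f where ee: "e = (X, x, Y, f)" by (cases e)
    have h: "X \<in> P" "Y \<in> P" "X \<subseteq> Y" "x \<in> Obj (Phi X)" "f \<in> Arr (Phi Y)" "Dom (Phi Y) f = Fo X Y x"
      using e ee by auto
    have l: "le (X, x) (Y, Fo X Y x)" using h by (simp add: le_iff)
    let ?p = "(X, x)" and ?q = "(Y, Fo X Y x)" and ?c = "(Y, Cod (Phi Y) f)"
    have kp: "k ?p \<in> Arr T" "Dom T (k ?p) = ?p" and kq: "k ?q \<in> Arr T" "Dom T (k ?q) = ?q"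
      and kc: "k ?c \<in> Arr T" "Dom T (k ?c) = ?c" using kP h le_TO[OF l] by auto
    note ep = eps_arr[OF h(2,5)] and io = iota_arr[OF l]
    have dg: "darr (Tg e) = Cg (Y, f)"
      using darr_gen[OF e] ee h dobj_Fo[OF h(1-4)] by (simp add: hgd_def hdl_def Cg_def)
    have gg: "(gm \<circ> darr) (Tg e) = hgG (Y, f)" using dg gm_gen h by simp
    have "Comp T ((gm \<circ> darr) (Tg e)) (k (Ts e)) =
        Comp T (Comp T (k ?c) (Comp T (eps Y f) (TG.ginv (k ?q)))) (Comp T (k ?q) (iota ?p ?q))"
      unfolding gg using kC[OF l] ee h by (simp add: hgG_def)
    also have "\<dots> = Comp T (Comp T (Comp T (k ?c) (Comp T (eps Y f) (TG.ginv (k ?q)))) (k ?q)) (iota ?p ?q)"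
      using TG.conj_arr[OF kq(1) kc(1) ep(1)] kq kc ep io h by (intro TG.assoc) auto
    also have "Comp T (Comp T (k ?c) (Comp T (eps Y f) (TG.ginv (k ?q)))) (k ?q) = Comp T (k ?c) (eps Y f)"
      using TG.conj_k[OF kq(1) kc(1) ep(1)] kq kc ep h by simp
    also have "Comp T (Comp T (k ?c) (eps Y f)) (iota ?p ?q) = Comp T (k ?c) (Comp T (eps Y f) (iota ?p ?q))"
      using kc ep io h by (intro TG.assoc[symmetric]) auto
    also have "Comp T (eps Y f) (iota ?p ?q) = Tg e" using gen_decomp[OF e[unfolded ee]] ee by simp
    finally show "Comp T (k (Tt e)) (id (Tg e)) = Comp T ((gm \<circ> darr) (Tg e)) (k (Ts e))"
      using ee by simp
  qed
  then show ?thesis by (simp add: T_def')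
qed

lemma eps_C: "nat_iso C C (dobj \<circ> go) (darr \<circ> gm) id id (Idt C)"
proof -
  have "nat_iso (pres_gpd CV CE Cs Ct CR) C (dobj \<circ> go) (darr \<circ> gm) id id (Idt C)"
  proof (rule presl.pres_nat_iso)
    show "\<And>e. e \<in> CE \<Longrightarrow> Cs e \<in> CV \<and> Ct e \<in> CV" by (rule C_st)
    show "groupoid C" by (rule grpC)
    show "gfunctor (pres_gpd CV CE Cs Ct CR) C id id" using gfunctor_id[OF grpC] by (simp add: C_def')
    show "gfunctor (pres_gpd CV CE Cs Ct CR) C (dobj \<circ> go) (darr \<circ> gm)"
      using gfunctor_comp[OF G_functor delta_functor] by (simp add: C_def')
    show "\<And>a. a \<in> CV \<Longrightarrow> Idt C a \<in> Arr C \<and> Dom C (Idt C a) = (dobj \<circ> go) a \<and> Cod C (Idt C a) = id a"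
    proof -
      fix a assume a: "a \<in> CV"
      then have "a \<in> Obj C" by (simp add: C_def' pres_gpd_def)
      then show "Idt C a \<in> Arr C \<and> Dom C (Idt C a) = (dobj \<circ> go) a \<and> Cod C (Idt C a) = id a"
        using dobj_go[OF a] by simp
    qed
  next
    fix e assume e: "e \<in> CE"
    obtain X f where ee: "e = (X, f)" by (cases e)
    have h: "X \<in> P" "f \<in> Arr (Phi X)" using e ee by auto
    let ?a = "(X, Dom (Phi X) f)" and ?c = "(X, Cod (Phi X) f)"
    have ka: "k ?a \<in> Arr T" "Dom T (k ?a) = ?a" "darr (k ?a) = Idt C (dobj ?a)"
      and kc: "k ?c \<in> Arr T" "Dom T (k ?c) = ?c" "darr (k ?c) = Idt C (dobj ?c)" using kP h by auto
    note ep = eps_arr[OF h]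
    have aC: "dobj ?a \<in> Obj C" "dobj ?c \<in> Obj C" using dobj_C h by auto
    have cg: "Cg e \<in> Arr C" "Dom C (Cg e) = dobj ?a" "Cod C (Cg e) = dobj ?c"
      using Cg_arr e ee by auto
    have "darr (gm (Cg e)) = darr (Comp T (k ?c) (Comp T (eps X f) (TG.ginv (k ?a))))"
      using gm_gen[OF e] ee by (simp add: hgG_def)
    also have "\<dots> = Comp C (darr (k ?c)) (Comp C (darr (eps X f)) (darr (TG.ginv (k ?a))))"
      using ka kc ep by (simp add: darr_comp)
    also have "\<dots> = Comp C (Idt C (dobj ?c)) (Comp C (Cg e) (Idt C (dobj ?a)))"
      using ka kc darr_ginv[OF ka(1)] darr_eps[OF h] ee aC by simp
    also have "\<dots> = Cg e" using cg by simp
    finally have "darr (gm (Cg e)) = Cg e" .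
    then show "Comp C (Idt C (Ct e)) ((darr \<circ> gm) (Cg e)) = Comp C (id (Cg e)) (Idt C (Cs e))"
      using cg ee by simp
  qed
  then show ?thesis by (simp add: C_def')
qed

lemma equivalence: "gpd_equivalence T C dobj darr"
  unfolding gpd_equivalence_def using delta_functor G_functor eta_T eps_C by blast

end

end



lemma set_eq1: "m \<le> n \<Longrightarrow> 1 \<le> m \<Longrightarrow> m < n \<Longrightarrow> {1..m - 1} \<union> {Suc m..n} = {1..n} - {m::nat}"
  by auto

lemma set_eq2: "1 \<le> n \<Longrightarrow> {1..n - 1} = {1..n} - {n::nat}"
  by auto

theorem corollary5p4:
  fixes n :: nat
    and Phi :: "nat set \<Rightarrow> ('o, 'm) gpd"
    and Fo :: "nat set \<Rightarrow> nat set \<Rightarrow> 'o \<Rightarrow> 'o"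
    and Fm :: "nat set \<Rightarrow> nat set \<Rightarrow> 'm \<Rightarrow> 'm"
  assumes n2: "n \<ge> 2"
    and diag: "gpd_diagram (Bposet {1..n} {}) Phi Fo Fm"
    and A1: "\<And>k. k \<in> {n - 2, n - 1} \<Longrightarrow> k \<ge> 1 \<Longrightarrow> condA Phi Fo Fm {1..k} {}"
    and A2: "\<And>k U. 1 \<le> k \<Longrightarrow> k \<le> n - 2 \<Longrightarrow> U \<subseteq> {k + 2..n} \<Longrightarrow> card U \<ge> n - k - 2 \<Longrightarrow>
               condA Phi Fo Fm ({1..k} \<union> U) U"
  shows "gpd_equivalence (twocolim (Bposet {1..n} {}) Phi Fo Fm) (colim (Bposet {1..n} {}) Phi Fo Fm)
           (delta_obj (Bposet {1..n} {}) Phi Fo) (delta_arr (Bposet {1..n} {}) Phi Fo Fm)"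
proof -
  interpret CB: cube "Bposet {1..n} {}" Phi Fo Fm n
    by (intro cube.intro diag.intro cube_axioms.intro diag) simp
  have Conn: "CB.Conn m" if m: "1 \<le> m" "m \<le> n" for m
  proof (cases "m = 1")
    case True
    then show ?thesis using CB.Conn1 by simp
  next
    case False
    then have m2: "2 \<le> m" using m by simp
    show ?thesis
    proof (rule CB.Conn_condA[OF m])
      show "condA Phi Fo Fm (CB.Vm m) {Suc m..n}"
      proof (cases "m = n")
        case True
        have "condA Phi Fo Fm {1..n - 1} {}" using A1[of "n - 1"] n2 by simp
        moreover have "{Suc m..n} = {}" using True by simp
        moreover have "CB.Vm m = {1..n - 1}" unfolding CB.Vm_def using True set_eq2 n2 by simp
        ultimately show ?thesis by simp
      next
        case False
        then have mn: "m < n" using m by simp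
        have c: "condA Phi Fo Fm ({1..m - 1} \<union> {Suc m..n}) {Suc m..n}"
          using A2[of "m - 1" "{Suc m..n}"] m2 mn by simp
        have "{1..m - 1} \<union> {Suc m..n} = CB.Vm m" unfolding CB.Vm_def using set_eq1 m mn by simp
        then show ?thesis using c by simp
      qed
    qed
  qed
  obtain k where k: "CB.Triv n k" using CB.triv_upto[OF Conn] by blast
  show ?thesis using CB.equivalence[OF k] .
qed

end
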